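(* Let $M\in\mathbb{N}$, $r\in\{1,\dots,M\}$, let $C\in\mathbb{R}^{M\times M}$ have singular values $\lambda_1\ge\dots\ge\lambda_M$, let $E\in\mathbb{R}^{M\times M}$ be any matrix with largest singular value $\sigma_1$, and let $\pi_r\in\mathcal{S}_{M,r}$ maximize $\|\tilde\pi_r C\|_{S_2}$ over $\mathcal{S}_{M,r}$. Define for $\tilde\pi_r\in\mathcal{S}_{M,r}$ $$Z^1_{\tilde\pi_r}:=\|\tilde\pi_r C\|_{S_2}^2-\|\pi_r C\|_{S_2}^2+2\operatorname{tr}\big(E^T(\tilde\pi_r-\pi_r)C\big).$$ Then $\sup_{\tilde\pi_r\in\mathcal{S}_{M,r}}Z^1_{\tilde\pi_r}\le\min(\mathrm{I}',\mathrm{II}',\mathrm{III}')$, where $$\mathrm{I}'=4r_M\lambda_1\sigma_1,$$ $$\mathrm{II}'=4r_M\frac{\lambda_1^2}{\lambda_r^2-\lambda_{r+1}^2}\sigma_1^2\ \text{ if }\lambda_r>\lambda_{r+1},\qquad \mathrm{II}'=\infty\ \text{ if }\lambda_r=\lambda_{r+1},$$ $$\mathrm{III}'=\max\Big(4\sqrt{r_M\Delta_r}\,\frac{\lambda_1}{\lambda_r}\sigma_1,\ 8r_M\frac{\lambda_1^2}{\lambda_r^2}\sigma_1^2\Big)\ \text{ if }\lambda_r>0,\qquad \mathrm{III}'=\infty\ \text{ if }\lambda_r=0.$$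
   Context: $\mathcal{S}_{M,r}$ denotes the set of all orthogonal projections of rank $r$ onto subspaces of $\mathbb{R}^M$. $r_M:=\min(r,M-r)$, $\Delta_r:=\sum_{i=r+1}^{2r}\lambda_i^2$ with the convention $\lambda_i:=0$ for $i>M$. $\|\cdot\|_{S_2}$ is the Hilbert–Schmidt norm. *)

theory Defs
  imports "Jordan_Normal_Form.DL_Rank" "HOL-Library.Extended_Real"
begin

text \<open>Real square matrices of size M are JNF matrices in carrier_mat M M.
  Indices of singular values are 1-based: lam 1 \<ge> lam 2 \<ge> ... \<ge> lam M.\<close>

definition orth_mat :: "nat \<Rightarrow> real mat \<Rightarrow> bool" where
  "orth_mat M U \<longleftrightarrow> U \<in> carrier_mat M M \<and> transpose_mat U * U = 1\<^sub>m M"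

definition has_singular_values :: "nat \<Rightarrow> real mat \<Rightarrow> (nat \<Rightarrow> real) \<Rightarrow> bool" where
  "has_singular_values M C lam \<longleftrightarrow>
     C \<in> carrier_mat M M \<and>
     (\<forall>i\<in>{1..M}. 0 \<le> lam i) \<and>
     (\<forall>i j. 1 \<le> i \<longrightarrow> i \<le> j \<longrightarrow> j \<le> M \<longrightarrow> lam j \<le> lam i) \<and>
     (\<exists>U V. orth_mat M U \<and> orth_mat M V \<and>
        C = U * mat_diag M (\<lambda>i. lam (Suc i)) * transpose_mat V)"

definition proj_set :: "nat \<Rightarrow> nat \<Rightarrow> real mat set" where
  "proj_set M r = {P. P \<in> carrier_mat M M \<and> transpose_mat P = P \<and> P * P = P
                      \<and> vec_space.rank M P = r}"

definition hs_norm :: "real mat \<Rightarrow> real" where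
  "hs_norm A = sqrt (\<Sum>i<dim_row A. \<Sum>j<dim_col A. (A $$ (i,j))\<^sup>2)"

definition mtrace :: "real mat \<Rightarrow> real" where
  "mtrace A = (\<Sum>i<dim_row A. A $$ (i,i))"

end

theory Submission
  imports Defs
begin

lemma mtrace_mult_comm:
  assumes A: "A \<in> carrier_mat n m" and B: "B \<in> carrier_mat m n"
  shows "mtrace (A * B) = mtrace (B * A)"
proof -
  have "mtrace (A * B) = (\<Sum>i<n. \<Sum>k<m. A $$ (i,k) * B $$ (k,i))"
    using A B by (simp add: mtrace_def scalar_prod_def row_def col_def atLeast0LessThan)
  also have "\<dots> = (\<Sum>k<m. \<Sum>i<n. B $$ (k,i) * A $$ (i,k))"
    by (subst sum.swap) (simp add: mult.commute)
  also have "\<dots> = mtrace (B * A)"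
    using A B by (simp add: mtrace_def scalar_prod_def row_def col_def atLeast0LessThan)
  finally show ?thesis .
qed

lemma mtrace_add: "A \<in> carrier_mat n n \<Longrightarrow> B \<in> carrier_mat n n \<Longrightarrow> mtrace (A + B) = mtrace A + mtrace B"
  by (simp add: mtrace_def sum.distrib)
lemma mtrace_minus: "A \<in> carrier_mat n n \<Longrightarrow> B \<in> carrier_mat n n \<Longrightarrow> mtrace (A - B) = mtrace A - mtrace B"
  by (simp add: mtrace_def sum_subtractf)
lemma mtrace_one: "mtrace (1\<^sub>m n) = real n"
  by (simp add: mtrace_def)
lemma mtrace_transpose: "A \<in> carrier_mat n n \<Longrightarrow> mtrace (transpose_mat A) = mtrace A"
  by (simp add: mtrace_def)
lemma mtrace_diag_right: "A \<in> carrier_mat n n \<Longrightarrow> mtrace (A * mat_diag n f) = (\<Sum>i<n. A $$ (i,i) * f i)"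
  by (simp add: mtrace_def mat_diag_mult_right)

definition hsq :: "real mat \<Rightarrow> real" where "hsq A = mtrace (transpose_mat A * A)"

lemma hsq_sum: "A \<in> carrier_mat n m \<Longrightarrow> hsq A = (\<Sum>j<m. \<Sum>i<n. (A $$ (i,j))\<^sup>2)"
  by (simp add: hsq_def mtrace_def scalar_prod_def row_def col_def atLeast0LessThan power2_eq_square)

lemma hsq_nonneg: "A \<in> carrier_mat n m \<Longrightarrow> 0 \<le> hsq A"
  by (simp add: hsq_sum sum_nonneg)

lemma hs_norm_sq: "A \<in> carrier_mat n m \<Longrightarrow> (hs_norm A)\<^sup>2 = hsq A"
proof -
  assume A: "A \<in> carrier_mat n m"
  have "(hs_norm A)\<^sup>2 = (\<Sum>i<n. \<Sum>j<m. (A $$ (i,j))\<^sup>2)"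
    using A by (simp add: hs_norm_def sum_nonneg)
  also have "\<dots> = hsq A" using A by (simp add: hsq_sum sum.swap[of _ "{..<n}"])
  finally show ?thesis .
qed

lemma hsq_transpose: "A \<in> carrier_mat n m \<Longrightarrow> hsq (transpose_mat A) = hsq A"
  by (simp add: hsq_sum sum.swap[of _ "{..<n}"])

lemma cs_sum_aux:
  fixes f g :: "'a \<Rightarrow> real"
  assumes fin: "finite S"
  shows "(\<Sum>x\<in>S. f x * g x) \<le> sqrt (\<Sum>x\<in>S. (f x)\<^sup>2) * sqrt (\<Sum>x\<in>S. (g x)\<^sup>2)"
proof -
  define A2 where "A2 = (\<Sum>x\<in>S. (f x)\<^sup>2)"
  define B2 where "B2 = (\<Sum>x\<in>S. (g x)\<^sup>2)"
  define a where "a = sqrt A2"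
  define b where "b = sqrt B2"
  have A20: "0 \<le> A2" unfolding A2_def by (auto intro: sum_nonneg)
  have B20: "0 \<le> B2" unfolding B2_def by (auto intro: sum_nonneg)
  have A2: "0 \<le> A2" "a\<^sup>2 = A2" using A20 unfolding a_def by auto
  have B2: "0 \<le> B2" "b\<^sup>2 = B2" using B20 unfolding b_def by auto
  have ab: "0 \<le> a" "0 \<le> b" unfolding a_def b_def using A20 B20 by auto
  have "0 \<le> (\<Sum>x\<in>S. (b * f x - a * g x)\<^sup>2)" by (simp add: sum_nonneg)
  also have "\<dots> = b\<^sup>2 * A2 - 2 * a * b * (\<Sum>x\<in>S. f x * g x) + a\<^sup>2 * B2"
    unfolding A2_def B2_def
    by (simp add: power2_diff power_mult_distrib sum.distrib sum_subtractf sum_distrib_left algebra_simps)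
  also have "\<dots> = 2 * a * b * (a * b - (\<Sum>x\<in>S. f x * g x))"
    using A2 B2 by (simp add: algebra_simps power2_eq_square)
  finally have *: "0 \<le> 2 * a * b * (a * b - (\<Sum>x\<in>S. f x * g x))" .
  show ?thesis
  proof (cases "a * b = 0")
    case True
    then have "A2 = 0 \<or> B2 = 0" using A2 B2 by (auto simp: power2_eq_square)
    then have "(\<forall>x\<in>S. f x = 0) \<or> (\<forall>x\<in>S. g x = 0)"
      unfolding A2_def B2_def using fin by (auto simp: sum_nonneg_eq_0_iff)
    then show ?thesis using True a_def b_def A2_def B2_def by auto
  next
    case False
    then have "0 < 2 * a * b" using ab by auto
    then have "0 \<le> a * b - (\<Sum>x\<in>S. f x * g x)" using * by (simp add: zero_le_mult_iff)
    then show ?thesis unfolding a_def b_def A2_def B2_def by simp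
  qed
qed

lemma cs_sum:
  fixes f g :: "'a \<Rightarrow> real"
  assumes fin: "finite S"
  shows "\<bar>\<Sum>x\<in>S. f x * g x\<bar> \<le> sqrt (\<Sum>x\<in>S. (f x)\<^sup>2) * sqrt (\<Sum>x\<in>S. (g x)\<^sup>2)"
proof -
  have 1: "(\<Sum>x\<in>S. f x * g x) \<le> sqrt (\<Sum>x\<in>S. (f x)\<^sup>2) * sqrt (\<Sum>x\<in>S. (g x)\<^sup>2)"
    by (rule cs_sum_aux[OF fin])
  have "(\<Sum>x\<in>S. (- f x) * g x) \<le> sqrt (\<Sum>x\<in>S. (- f x)\<^sup>2) * sqrt (\<Sum>x\<in>S. (g x)\<^sup>2)"
    by (rule cs_sum_aux[OF fin])
  then have 2: "- (\<Sum>x\<in>S. f x * g x) \<le> sqrt (\<Sum>x\<in>S. (f x)\<^sup>2) * sqrt (\<Sum>x\<in>S. (g x)\<^sup>2)"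
    by (simp add: sum_negf)
  show ?thesis using 1 2 by linarith
qed

lemma mtrace_tAB: "A \<in> carrier_mat n m \<Longrightarrow> B \<in> carrier_mat n m \<Longrightarrow>
   mtrace (transpose_mat A * B) = (\<Sum>p\<in>{..<m}\<times>{..<n}. A $$ (snd p, fst p) * B $$ (snd p, fst p))"
  by (simp add: mtrace_def scalar_prod_def row_def col_def atLeast0LessThan sum.cartesian_product case_prod_beta)

lemma hsq_prod: "A \<in> carrier_mat n m \<Longrightarrow> hsq A = (\<Sum>p\<in>{..<m}\<times>{..<n}. (A $$ (snd p, fst p))\<^sup>2)"
  by (simp add: hsq_def mtrace_tAB power2_eq_square)

lemma cs_mtrace:
  assumes "A \<in> carrier_mat n m" "B \<in> carrier_mat n m"
  shows "\<bar>mtrace (transpose_mat A * B)\<bar> \<le> sqrt (hsq A) * sqrt (hsq B)"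
  using assms by (simp add: mtrace_tAB hsq_prod cs_sum)

definition proj :: "nat \<Rightarrow> real mat \<Rightarrow> bool" where
  "proj n P \<longleftrightarrow> P \<in> carrier_mat n n \<and> transpose_mat P = P \<and> P * P = P"

lemma proj_sym_entry: "proj n P \<Longrightarrow> i < n \<Longrightarrow> j < n \<Longrightarrow> P $$ (j,i) = P $$ (i,j)"
  unfolding proj_def by (metis carrier_matD index_transpose_mat(1))

lemma proj_diag: assumes "proj n P" "i < n"
  shows "P $$ (i,i) = (\<Sum>k<n. (P $$ (i,k))\<^sup>2)"
proof -
  have Pc: "P \<in> carrier_mat n n" using assms proj_def by auto
  have "(P * P) $$ (i,i) = (\<Sum>k<n. P $$ (i,k) * P $$ (k,i))"
    using assms Pc by (simp add: scalar_prod_def row_def col_def atLeast0LessThan)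
  then have "P $$ (i,i) = (\<Sum>k<n. P $$ (i,k) * P $$ (k,i))"
    using assms unfolding proj_def by simp
  also have "\<dots> = (\<Sum>k<n. (P $$ (i,k))\<^sup>2)"
    by (rule sum.cong) (use assms proj_sym_entry in \<open>auto simp: power2_eq_square\<close>)
  finally show ?thesis .
qed

lemma proj_diag_nonneg: "proj n P \<Longrightarrow> i < n \<Longrightarrow> 0 \<le> P $$ (i,i)"
  by (simp add: proj_diag sum_nonneg)

lemma proj_diag_le1: assumes "proj n P" "i < n" shows "P $$ (i,i) \<le> 1"
proof -
  have "(P $$ (i,i))\<^sup>2 \<le> (\<Sum>k<n. (P $$ (i,k))\<^sup>2)"
    using assms(2) by (intro member_le_sum) auto
  then have "(P $$ (i,i))\<^sup>2 \<le> P $$ (i,i)" using proj_diag[OF assms] by simp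
  then have "P $$ (i,i) * P $$ (i,i) \<le> P $$ (i,i) * 1" by (simp add: power2_eq_square)
  then show ?thesis using proj_diag_nonneg[OF assms]
    by (cases "P $$ (i,i) = 0") (auto simp: mult_le_cancel_left)
qed

lemma proj_diag_zero: assumes "proj n P" "i < n" "P $$ (i,i) = 0" "k < n"
  shows "P $$ (i,k) = 0" "P $$ (k,i) = 0"
proof -
  have "(\<Sum>k<n. (P $$ (i,k))\<^sup>2) = 0" using proj_diag[OF assms(1,2)] assms(3) by simp
  then have "\<forall>k\<in>{..<n}. (P $$ (i,k))\<^sup>2 = 0" by (subst sum_nonneg_eq_0_iff[symmetric]) auto
  then show "P $$ (i,k) = 0" using assms(4) by auto
  then show "P $$ (k,i) = 0" using proj_sym_entry[OF assms(1) assms(2,4)] by simp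
qed

lemma mtrace_proj_nonneg: "proj n P \<Longrightarrow> 0 \<le> mtrace P"
  unfolding mtrace_def by (rule sum_nonneg) (auto simp: proj_def intro: proj_diag_nonneg)

lemma proj_deflate:
  assumes P: "proj n P" and j: "j < n" and p: "0 < P $$ (j,j)"
  defines "R \<equiv> mat n n (\<lambda>(i,k). P $$ (i,j) * P $$ (k,j) / P $$ (j,j))"
  shows "proj n (P - R)" "mtrace (P - R) = mtrace P - 1" "vec_space.rank n R \<le> 1"
    "R \<in> carrier_mat n n"
proof -
  let ?p = "P $$ (j,j)"
  have Pc: "P \<in> carrier_mat n n" using P proj_def by auto
  have Rc: "R \<in> carrier_mat n n" unfolding R_def by auto
  then show "R \<in> carrier_mat n n" .
  have PP: "(\<Sum>l<n. P $$ (i,l) * P $$ (l,j)) = P $$ (i,j)" if "i < n" for i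
  proof -
    have "(P * P) $$ (i,j) = P $$ (i,j)" using P unfolding proj_def by simp
    then show ?thesis using that j Pc by (simp add: scalar_prod_def row_def col_def atLeast0LessThan)
  qed
  have sym: "P $$ (a,b) = P $$ (b,a)" if "a < n" "b < n" for a b using proj_sym_entry[OF P] that by auto
  have PR: "P * R = R"
  proof (rule eq_matI)
    fix i k assume ik: "i < dim_row R" "k < dim_col R"
    then have ik': "i < n" "k < n" using Rc by auto
    have "(P * R) $$ (i,k) = (\<Sum>l<n. P $$ (i,l) * (P $$ (l,j) * P $$ (k,j) / ?p))"
      using ik' Pc Rc by (simp add: scalar_prod_def row_def col_def atLeast0LessThan R_def)
    also have "\<dots> = (\<Sum>l<n. P $$ (i,l) * P $$ (l,j)) * P $$ (k,j) / ?p"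
      by (simp add: sum_distrib_right sum_divide_distrib mult.assoc)
    also have "\<dots> = R $$ (i,k)" using PP[OF ik'(1)] ik' by (simp add: R_def)
    finally show "(P * R) $$ (i,k) = R $$ (i,k)" .
  qed (use Pc Rc in auto)
  have RP: "R * P = R"
  proof (rule eq_matI)
    fix i k assume ik: "i < dim_row R" "k < dim_col R"
    then have ik': "i < n" "k < n" using Rc by auto
    have "(R * P) $$ (i,k) = (\<Sum>l<n. (P $$ (i,j) * P $$ (l,j) / ?p) * P $$ (l,k))"
      using ik' Pc Rc by (simp add: scalar_prod_def row_def col_def atLeast0LessThan R_def)
    also have "\<dots> = P $$ (i,j) * (\<Sum>l<n. P $$ (k,l) * P $$ (l,j)) / ?p"
      unfolding sum_distrib_left sum_divide_distrib
    proof (rule sum.cong[OF refl])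
      fix l assume "l \<in> {..<n}"
      then have "P $$ (l,k) = P $$ (k,l)" using sym ik' by auto
      then show "P $$ (i, j) * P $$ (l, j) / ?p * P $$ (l, k) = P $$ (i, j) * (P $$ (k, l) * P $$ (l, j)) / ?p"
        by (simp add: mult_ac)
    qed
    also have "\<dots> = R $$ (i,k)" using PP[OF ik'(2)] ik' by (simp add: R_def mult.commute)
    finally show "(R * P) $$ (i,k) = R $$ (i,k)" .
  qed (use Pc Rc in auto)
  have RR: "R * R = R"
  proof (rule eq_matI)
    fix i k assume ik: "i < dim_row R" "k < dim_col R"
    then have ik': "i < n" "k < n" using Rc by auto
    have "(R * R) $$ (i,k) = (\<Sum>l<n. (P $$ (i,j) * P $$ (l,j) / ?p) * (P $$ (l,j) * P $$ (k,j) / ?p))"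
      using ik' Pc Rc by (simp add: scalar_prod_def row_def col_def atLeast0LessThan R_def)
    also have "\<dots> = P $$ (i,j) * P $$ (k,j) / ?p * ((\<Sum>l<n. P $$ (j,l) * P $$ (l,j)) / ?p)"
      unfolding sum_distrib_left sum_divide_distrib
    proof (rule sum.cong[OF refl])
      fix l assume "l \<in> {..<n}"
      then have "P $$ (l,j) = P $$ (j,l)" using sym j by auto
      then show "P $$ (i, j) * P $$ (l, j) / ?p * (P $$ (l, j) * P $$ (k, j) / ?p) =
           P $$ (i, j) * P $$ (k, j) / ?p * (P $$ (j, l) * P $$ (l, j) / ?p)"
        by (simp add: field_simps)
    qed
    also have "\<dots> = R $$ (i,k)" using PP[OF j] ik' p by (simp add: R_def)
    finally show "(R * R) $$ (i,k) = R $$ (i,k)" .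
  qed (use Pc Rc in auto)
  have RT: "transpose_mat R = R"
    by (rule eq_matI) (auto simp: R_def mult.commute)
  have "(P - R) * (P - R) = P * (P - R) - R * (P - R)"
    using Pc Rc by (intro minus_mult_distrib_mat) auto
  also have "\<dots> = (P * P - P * R) - (R * P - R * R)"
    using Pc Rc by (simp add: mult_minus_distrib_mat[of _ n n])
  also have "\<dots> = P - R"
    using P PR RP RR Pc Rc unfolding proj_def by (intro eq_matI) auto
  finally have idem: "(P - R) * (P - R) = P - R" .
  have "transpose_mat (P - R) = P - R" using P RT Pc Rc unfolding proj_def by (simp add: transpose_minus)
  then show "proj n (P - R)" using idem Pc Rc unfolding proj_def by auto
  have "mtrace R = (\<Sum>i<n. P $$ (i,j) * P $$ (i,j)) / ?p"
    using Rc by (simp add: mtrace_def R_def sum_divide_distrib)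
  also have "\<dots> = 1"
  proof -
    have "(\<Sum>i<n. P $$ (i,j) * P $$ (i,j)) = (\<Sum>i<n. P $$ (j,i) * P $$ (i,j))"
    proof (rule sum.cong[OF refl])
      fix l assume "l \<in> {..<n}"
      then have "P $$ (l,j) = P $$ (j,l)" using sym j by auto
      then show "P $$ (l, j) * P $$ (l, j) = P $$ (j, l) * P $$ (l, j)" by simp
    qed
    then show ?thesis using PP[OF j] p by simp
  qed
  finally show "mtrace (P - R) = mtrace P - 1" using mtrace_minus[OF Pc Rc] by simp
  show "vec_space.rank n R \<le> 1"
    by (rule vec_space.rank_le_1_product_entries[OF Rc, of "\<lambda>i. P $$ (i,j) / ?p" "\<lambda>k. P $$ (k,j)"])
      (use Rc in \<open>auto simp: R_def\<close>)
qed


lemma proj_zero_if_diag: assumes "proj n P" "\<forall>i<n. P $$ (i,i) = 0" shows "P = 0\<^sub>m n n"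
proof -
  have Pc: "P \<in> carrier_mat n n" using assms proj_def by auto
  show ?thesis
  proof (rule eq_matI)
    fix i j assume "i < dim_row (0\<^sub>m n n :: real mat)" "j < dim_col (0\<^sub>m n n :: real mat)"
    then have "i < n" "j < n" by auto
    then show "P $$ (i,j) = 0\<^sub>m n n $$ (i,j)" using proj_diag_zero(1)[OF assms(1) \<open>i<n\<close> _ \<open>j<n\<close>] assms(2) by auto
  qed (use Pc in auto)
qed

lemma proj_rank_le_trace_aux:
  "\<forall>P. proj n P \<longrightarrow> mtrace P \<le> real k \<longrightarrow> real (vec_space.rank n P) \<le> mtrace P"
proof (induction k)
  case 0
  show ?case
  proof (intro allI impI)
    fix P assume P: "proj n P" and t: "mtrace P \<le> real 0"
    have Pc: "P \<in> carrier_mat n n" using P proj_def by auto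
    have nn: "\<forall>i\<in>{..<n}. 0 \<le> P $$ (i,i)" using proj_diag_nonneg[OF P] by auto
    have "(\<Sum>i<n. P $$ (i,i)) = 0" using t mtrace_proj_nonneg[OF P] Pc unfolding mtrace_def by auto
    then have "\<forall>i\<in>{..<n}. P $$ (i,i) = 0" using sum_nonneg_eq_0_iff[of "{..<n}" "\<lambda>i. P $$ (i,i)"] nn by auto
    then have "P = 0\<^sub>m n n" using proj_zero_if_diag[OF P] by auto
    moreover have "vec_space.rank n (0\<^sub>m n n :: real mat) = 0" by (rule vec_space.rank_0I)
    ultimately show "real (vec_space.rank n P) \<le> mtrace P" using mtrace_proj_nonneg[OF P] by simp
  qed
next
  case (Suc k)
  show ?case
  proof (intro allI impI)
    fix P assume P: "proj n P" and t: "mtrace P \<le> real (Suc k)"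
    have Pc: "P \<in> carrier_mat n n" using P proj_def by auto
    show "real (vec_space.rank n P) \<le> mtrace P"
    proof (cases "\<forall>i<n. P $$ (i,i) = 0")
      case True
      then have "P = 0\<^sub>m n n" using proj_zero_if_diag[OF P] by auto
      moreover have "vec_space.rank n (0\<^sub>m n n :: real mat) = 0" by (rule vec_space.rank_0I)
      ultimately show ?thesis using mtrace_proj_nonneg[OF P] by simp
    next
      case False
      then obtain j where j: "j < n" "P $$ (j,j) \<noteq> 0" by auto
      then have pj: "0 < P $$ (j,j)" using proj_diag_nonneg[OF P j(1)] by auto
      define R where "R = mat n n (\<lambda>(i,k). P $$ (i,j) * P $$ (k,j) / P $$ (j,j))"
      note D = proj_deflate[OF P j(1) pj, folded R_def]
      have "real (vec_space.rank n (P - R)) \<le> mtrace (P - R)"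
        using Suc.IH D(1,2) t by auto
      have eq: "P = (P - R) + R" using Pc D(4) by (intro eq_matI) auto
      have "vec_space.rank n P \<le> vec_space.rank n (P - R) + vec_space.rank n R"
        by (subst eq, rule vec_space.rank_subadditive) (use Pc D(4) in auto)
      then show ?thesis using \<open>real (vec_space.rank n (P - R)) \<le> mtrace (P - R)\<close> D(2,3) by linarith
    qed
  qed
qed

lemma proj_rank_le_trace: "proj n P \<Longrightarrow> real (vec_space.rank n P) \<le> mtrace P"
proof -
  assume P: "proj n P"
  have "mtrace P \<le> real (nat \<lceil>mtrace P\<rceil>)" by (rule real_nat_ceiling_ge)
  then show ?thesis using proj_rank_le_trace_aux[of n "nat \<lceil>mtrace P\<rceil>"] P by blast
qed

lemma proj_compl: "proj n P \<Longrightarrow> proj n (1\<^sub>m n - P)"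
proof -
  assume P: "proj n P"
  have Pc: "P \<in> carrier_mat n n" using P proj_def by auto
  have "(1\<^sub>m n - P) * (1\<^sub>m n - P) = 1\<^sub>m n * (1\<^sub>m n - P) - P * (1\<^sub>m n - P)"
    using Pc by (intro minus_mult_distrib_mat) auto
  also have "\<dots> = (1\<^sub>m n - P) - (P * 1\<^sub>m n - P * P)"
    using Pc mult_minus_distrib_mat[of P n n "1\<^sub>m n" n P] by simp
  also have "\<dots> = (1\<^sub>m n - P) - (P - P * P)" using Pc by simp
  also have "\<dots> = 1\<^sub>m n - P" using P Pc unfolding proj_def by (intro eq_matI) auto
  moreover have "transpose_mat (1\<^sub>m n - P) = 1\<^sub>m n - P"
    using transpose_minus[of "1\<^sub>m n" n n P] Pc P unfolding proj_def by simp
  ultimately show ?thesis using Pc unfolding proj_def by auto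
qed

lemma proj_rank_trace: "proj n P \<Longrightarrow> real (vec_space.rank n P) = mtrace P"
proof -
  assume P: "proj n P"
  have Pc: "P \<in> carrier_mat n n" using P proj_def by auto
  have r1: "vec_space.rank n (1\<^sub>m n :: real mat) = n"
    using vec_space.det_rank_iff[of "1\<^sub>m n :: real mat" n] by simp
  have eq: "1\<^sub>m n = P + (1\<^sub>m n - P)" using Pc by (intro eq_matI) auto
  have "vec_space.rank n (1\<^sub>m n :: real mat) \<le> vec_space.rank n P + vec_space.rank n (1\<^sub>m n - P)"
    by (subst eq, rule vec_space.rank_subadditive) (use Pc in auto)
  moreover have "real (vec_space.rank n (1\<^sub>m n - P)) \<le> mtrace (1\<^sub>m n - P)"
    using proj_rank_le_trace[OF proj_compl[OF P]] .
  moreover have "mtrace (1\<^sub>m n - P) = n - mtrace P" using mtrace_minus[of "1\<^sub>m n" n P] Pc mtrace_one by simp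
  ultimately have "mtrace P \<le> real (vec_space.rank n P)" using r1 by linarith
  then show ?thesis using proj_rank_le_trace[OF P] by linarith
qed

lemma cm_mult: "A \<in> carrier_mat n n \<Longrightarrow> B \<in> carrier_mat n n \<Longrightarrow> A * B \<in> carrier_mat n n" by simp
lemma cm_minus: "A \<in> carrier_mat n n \<Longrightarrow> B \<in> carrier_mat n n \<Longrightarrow> A - B \<in> carrier_mat n n" by (simp add: minus_carrier_mat)
lemma cm_add: "A \<in> carrier_mat n n \<Longrightarrow> B \<in> carrier_mat n n \<Longrightarrow> A + B \<in> carrier_mat n n" by simp
lemma cm_tr: "A \<in> carrier_mat n n \<Longrightarrow> transpose_mat A \<in> carrier_mat n n" by simp
lemmas cm = cm_mult cm_minus cm_add cm_tr
lemma sq_assoc: "A \<in> carrier_mat n n \<Longrightarrow> B \<in> carrier_mat n n \<Longrightarrow> C \<in> carrier_mat n n \<Longrightarrow> (A * B) * C = A * (B * C)" by simp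
lemma sq_ldist: "(A::real mat) \<in> carrier_mat n n \<Longrightarrow> B \<in> carrier_mat n n \<Longrightarrow> C \<in> carrier_mat n n \<Longrightarrow> (A - B) * C = A * C - B * C"
  using minus_mult_distrib_mat[of A n n B C n] by auto
lemma sq_rdist: "(A::real mat) \<in> carrier_mat n n \<Longrightarrow> B \<in> carrier_mat n n \<Longrightarrow> C \<in> carrier_mat n n \<Longrightarrow> C * (A - B) = C * A - C * B"
  using mult_minus_distrib_mat[of C n n A n B] by auto
lemma sq_tmult: "(A::real mat) \<in> carrier_mat n n \<Longrightarrow> B \<in> carrier_mat n n \<Longrightarrow> transpose_mat (A * B) = transpose_mat B * transpose_mat A"
  using transpose_mult[of A n n B n] by auto
lemma sq_tminus: "A \<in> carrier_mat n n \<Longrightarrow> B \<in> carrier_mat n n \<Longrightarrow> transpose_mat (A - B) = transpose_mat A - transpose_mat B"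
  by (rule transpose_minus) auto
lemma sq_ladd: "(A::real mat) \<in> carrier_mat n n \<Longrightarrow> B \<in> carrier_mat n n \<Longrightarrow> C \<in> carrier_mat n n \<Longrightarrow> (A + B) * C = A * C + B * C"
  using add_mult_distrib_mat[of A n n B C n] by auto
lemma sq_radd: "(A::real mat) \<in> carrier_mat n n \<Longrightarrow> B \<in> carrier_mat n n \<Longrightarrow> C \<in> carrier_mat n n \<Longrightarrow> C * (A + B) = C * A + C * B"
  using mult_add_distrib_mat[of C n n A n B] by auto
lemma sq_one_l: "(A::real mat) \<in> carrier_mat n n \<Longrightarrow> 1\<^sub>m n * A = A" by simp
lemma sq_one_r: "(A::real mat) \<in> carrier_mat n n \<Longrightarrow> A * 1\<^sub>m n = A" by simp

lemma diag_tAA_nonneg: "(A::real mat) \<in> carrier_mat n n \<Longrightarrow> i < n \<Longrightarrow> 0 \<le> (transpose_mat A * A) $$ (i,i)"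
  by (auto simp: scalar_prod_def row_def col_def intro!: sum_nonneg)

lemma proj_hsq: "proj n Q \<Longrightarrow> hsq Q = mtrace Q"
  unfolding proj_def hsq_def by simp

lemma L1_left:
  assumes Q: "proj n Q" and X: "X \<in> carrier_mat n n" and QX: "Q * X = X"
    and Fc: "F \<in> carrier_mat n n"
    and Fb: "\<forall>A \<in> carrier_mat n n. hsq (transpose_mat F * A) \<le> sig\<^sup>2 * hsq A" and sig: "0 \<le> sig"
  shows "\<bar>mtrace (transpose_mat F * X)\<bar> \<le> sig * sqrt (mtrace Q) * sqrt (hsq X)"
proof -
  have Qc: "Q \<in> carrier_mat n n" and Qt: "transpose_mat Q = Q" using Q proj_def by auto
  have "transpose_mat F * X = transpose_mat (Q * F) * X"
    using Qc Fc X Qt QX by (simp add: sq_tmult[of _ n] sq_assoc[of _ n] cm)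
  then have "\<bar>mtrace (transpose_mat F * X)\<bar> \<le> sqrt (hsq (Q * F)) * sqrt (hsq X)"
    using cs_mtrace[of "Q * F" n n X] Qc Fc X by simp
  also have "hsq (Q * F) = hsq (transpose_mat F * Q)"
    using hsq_transpose[of "Q * F" n n] Qc Fc Qt by (simp add: sq_tmult[of _ n])
  also have "\<dots> \<le> sig\<^sup>2 * mtrace Q" using Fb Qc proj_hsq[OF Q] by auto
  finally show ?thesis
    using sig hsq_nonneg[OF X] by (simp add: real_sqrt_mult mult_right_mono)
qed

lemma L1_right:
  assumes Q: "proj n Q" and X: "X \<in> carrier_mat n n" and XQ: "X * Q = X"
    and Fc: "F \<in> carrier_mat n n"
    and Fb: "\<forall>A \<in> carrier_mat n n. hsq (F * A) \<le> sig\<^sup>2 * hsq A" and sig: "0 \<le> sig"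
  shows "\<bar>mtrace (transpose_mat F * X)\<bar> \<le> sig * sqrt (mtrace Q) * sqrt (hsq X)"
proof -
  have Qc: "Q \<in> carrier_mat n n" and Qt: "transpose_mat Q = Q" using Q proj_def by auto
  have "mtrace (transpose_mat F * X) = mtrace (transpose_mat F * X * Q)"
    using XQ Fc X Qc by (simp add: sq_assoc[of _ n] cm)
  also have "\<dots> = mtrace (Q * (transpose_mat F * X))"
    using mtrace_mult_comm[of "transpose_mat F * X" n n Q] Fc X Qc by simp
  also have "\<dots> = mtrace (transpose_mat (F * Q) * X)"
    using Qc Fc X Qt by (simp add: sq_tmult[of _ n] sq_assoc[of _ n] cm)
  finally have "\<bar>mtrace (transpose_mat F * X)\<bar> \<le> sqrt (hsq (F * Q)) * sqrt (hsq X)"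
    using cs_mtrace[of "F * Q" n n X] Qc Fc X by simp
  also have "hsq (F * Q) \<le> sig\<^sup>2 * mtrace Q" using Fb Qc proj_hsq[OF Q] by auto
  finally show ?thesis
    using sig hsq_nonneg[OF X] by (simp add: real_sqrt_mult mult_right_mono)
qed


lemma sum_split_at:
  fixes f :: "nat \<Rightarrow> real"
  shows "r \<le> n \<Longrightarrow> (\<Sum>i<n. f i) = (\<Sum>i<r. f i) + (\<Sum>i\<in>{r..<n}. f i)"
  by (metis atLeast0LessThan le0 sum.atLeastLessThan_concat)

lemma knapsack:
  fixes d g h :: "nat \<Rightarrow> real"
  assumes r1: "1 \<le> r" and rn: "r \<le> n"
  and d_mono: "\<forall>i j. i \<le> j \<longrightarrow> d j \<le> d i" and d_nn: "\<forall>i. 0 \<le> d i" and d_zero: "\<forall>i\<ge>n. d i = 0"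
  and g: "\<forall>i<n. 0 \<le> g i \<and> g i \<le> 1" and gs: "(\<Sum>i<n. g i) = r"
  and h: "\<forall>i<n. 0 \<le> h i \<and> h i \<le> 1 - g i" and hs: "(\<Sum>i<n. h i) \<le> r"
  and str1: "\<forall>i<n. g i < 1 \<longrightarrow> d i \<le> d (r-1)"
  and str2: "\<forall>i<n. 0 < g i \<longrightarrow> d (r-1) \<le> d i"
  shows "(\<Sum>i<n. d i * h i) \<le> (\<Sum>i\<in>{r..<2*r}. d i)"
proof -
  define th where "th = d (2*r-1)"
  define de where "de = d (r-1)"
  define pos where "pos = (\<lambda>x::real. max x 0)"
  have th0: "0 \<le> th" using d_nn th_def by auto
  have deth: "th \<le> de" unfolding th_def de_def using d_mono by auto
  define q where "q = (\<lambda>i. if i < r then (de - th) * (1 - g i) else pos (d i - th) - (de - th) * g i)"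
  have A: "(\<Sum>i<n. d i * h i) = (\<Sum>i<n. (d i - th) * h i) + th * (\<Sum>i<n. h i)"
    by (simp add: algebra_simps sum.distrib sum_distrib_left sum_subtractf)
  have A2: "th * (\<Sum>i<n. h i) \<le> th * r" using th0 hs by (simp add: mult_left_mono)
  have B: "(d i - th) * h i \<le> q i" if i: "i < n" for i
  proof (cases "i < r")
    case True
    show ?thesis
    proof (cases "h i = 0")
      case True
      then show ?thesis using \<open>i < r\<close> g i deth by (simp add: q_def)
    next
      case False
      then have "0 < h i" using h i by (auto simp: less_le)
      then have "g i < 1" using h i by auto
      then have "d i \<le> de" using str1 i de_def by auto
      moreover have "de \<le> d i" using d_mono \<open>i < r\<close> de_def by auto
      ultimately have "d i = de" by auto
      then show ?thesis using \<open>i < r\<close> h i deth by (simp add: q_def mult_left_mono)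
    qed
  next
    case False
    show ?thesis
    proof (cases "g i = 0")
      case True
      have "(d i - th) * h i \<le> pos (d i - th)"
      proof (cases "th \<le> d i")
        case True
        have "h i \<le> 1" using h g i by force
        then have "(d i - th) * h i \<le> (d i - th) * 1" using True by (intro mult_left_mono) auto
        then show ?thesis by (simp add: pos_def)
      next
        case False
        then have "(d i - th) * h i \<le> 0" using h i by (simp add: mult_nonpos_nonneg)
        then show ?thesis by (simp add: pos_def)
      qed
      then show ?thesis using False True by (simp add: q_def)
    next
      case gne: False
      then have "0 < g i" using g i by (auto simp: less_le)
      then have "de \<le> d i" using str2 i de_def by auto
      moreover have "d i \<le> de" using d_mono False de_def by auto
      ultimately have "d i = de" by auto
      moreover have "(de - th) * (g i + h i) \<le> (de - th) * 1"
        using h i deth by (intro mult_left_mono) auto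
      ultimately show ?thesis using False h i deth by (simp add: q_def pos_def algebra_simps)
    qed
  qed
  have C: "(\<Sum>i<n. q i) = (\<Sum>i\<in>{r..<n}. pos (d i - th))"
  proof -
    have "(\<Sum>i<n. q i) = (\<Sum>i<r. q i) + (\<Sum>i\<in>{r..<n}. q i)" by (rule sum_split_at[OF rn])
    also have "(\<Sum>i<r. q i) = (de - th) * (r - (\<Sum>i<r. g i))"
      by (simp add: q_def sum_distrib_left[symmetric] sum_subtractf)
    also have "(\<Sum>i\<in>{r..<n}. q i) = (\<Sum>i\<in>{r..<n}. pos (d i - th)) - (de - th) * (\<Sum>i\<in>{r..<n}. g i)"
      by (simp add: q_def sum_distrib_left sum_subtractf)
    also have "(\<Sum>i\<in>{r..<n}. g i) = r - (\<Sum>i<r. g i)" using sum_split_at[OF rn, of g] gs by simp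
    finally show ?thesis by simp
  qed
  have D: "(\<Sum>i\<in>{r..<n}. pos (d i - th)) = (\<Sum>i\<in>{r..<2*r}. d i - th)"
  proof -
    have z: "pos (d i - th) = 0" if "2*r \<le> i \<or> n \<le> i" for i
    proof -
      have "d i \<le> th"
        using that d_mono d_zero th0 unfolding th_def by (metis diff_le_self le_trans nat_le_linear order_refl)
      then show ?thesis by (simp add: pos_def)
    qed
    have "(\<Sum>i\<in>{r..<n}. pos (d i - th)) = (\<Sum>i\<in>{r..<max n (2*r)}. pos (d i - th))"
      by (rule sum.mono_neutral_left) (auto intro: z)
    also have "\<dots> = (\<Sum>i\<in>{r..<2*r}. pos (d i - th))"
      by (rule sum.mono_neutral_right) (auto intro: z)
    also have "\<dots> = (\<Sum>i\<in>{r..<2*r}. d i - th)"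
    proof (rule sum.cong[OF refl])
      fix i assume "i \<in> {r..<2*r}"
      then have "th \<le> d i" unfolding th_def using d_mono by auto
      then show "pos (d i - th) = d i - th" by (simp add: pos_def)
    qed
    finally show ?thesis .
  qed
  have E: "(\<Sum>i\<in>{r..<2*r}. d i - th) + th * r = (\<Sum>i\<in>{r..<2*r}. d i)"
    by (simp add: sum_subtractf)
  have "(\<Sum>i<n. (d i - th) * h i) \<le> (\<Sum>i<n. q i)" using B by (intro sum_mono) auto
  then show ?thesis using A A2 C D E by linarith
qed


lemma arith_I:
  fixes p q s x l :: real
  assumes "p \<le> q" "0 \<le> s" "0 \<le> p" "p \<le> x" "q \<le> x" "x \<le> l"
  shows "p\<^sup>2 - q\<^sup>2 + s * (p + q) \<le> 2 * s * l"
proof -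
  have "p\<^sup>2 \<le> q\<^sup>2" using assms by (simp add: power_mono)
  moreover have "s * (p + q) \<le> s * (2 * l)" using assms by (intro mult_left_mono) auto
  ultimately show ?thesis by simp
qed

lemma arith_II:
  fixes x s l g :: real
  assumes "0 < g"
  shows "- g * x\<^sup>2 + 2 * s * l * x \<le> (s * l)\<^sup>2 / g"
proof -
  have "0 \<le> (g * x - s * l)\<^sup>2" by simp
  then have "2 * g * (s * l * x) \<le> g\<^sup>2 * x\<^sup>2 + (s * l)\<^sup>2" by (simp add: power2_eq_square algebra_simps)
  then have "g * (- g * x\<^sup>2 + 2 * s * l * x) \<le> (s * l)\<^sup>2"
    by (simp add: power2_eq_square algebra_simps)
  then show ?thesis using assms by (simp add: pos_le_divide_eq mult.commute)
qed

lemma arith_III: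
  fixes p q s D :: real
  assumes "0 \<le> p" "p \<le> q" "0 \<le> s" "p\<^sup>2 \<le> D"
  shows "p\<^sup>2 - q\<^sup>2 + s * (p + q) \<le> max (2 * s * sqrt D) (s\<^sup>2)"
proof (cases "s \<le> 2 * p")
  case True
  have "0 \<le> (q - p) * (q + p - s)" using assms True by (intro mult_nonneg_nonneg) auto
  then have "p\<^sup>2 - q\<^sup>2 + s * (p + q) \<le> 2 * s * p" by (simp add: power2_eq_square algebra_simps)
  also have "p \<le> sqrt D" using assms real_le_rsqrt by auto
  then have "2 * s * p \<le> 2 * s * sqrt D" using assms by (simp add: mult_left_mono)
  finally show ?thesis by simp
next
  case False
  have "0 \<le> (q - s/2)\<^sup>2" by simp
  then have "- q\<^sup>2 + s * q \<le> s\<^sup>2 / 4" by (simp add: power2_eq_square algebra_simps)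
  moreover have "p\<^sup>2 \<le> (s/2)\<^sup>2" using False assms by (intro power_mono) auto
  moreover have "s * p \<le> s * (s/2)" using False assms by (intro mult_left_mono) auto
  ultimately have "p\<^sup>2 - q\<^sup>2 + s * (p + q) \<le> s\<^sup>2" by (simp add: power2_eq_square algebra_simps)
  then show ?thesis by simp
qed

lemma transpose_diag: "transpose_mat (mat_diag n f) = mat_diag n f"
  by (rule eq_matI) (auto simp: mat_diag_def)

lemma proj_diag_one: assumes P: "proj n P" and j: "j < n" and one: "P $$ (j,j) = 1" and k: "k < n" "k \<noteq> j"
  shows "P $$ (j,k) = 0" "P $$ (k,j) = 0"
proof -
  have "(\<Sum>l<n. (P $$ (j,l))\<^sup>2) = 1" using proj_diag[OF P j] one by simp
  moreover have "(\<Sum>l<n. (P $$ (j,l))\<^sup>2) = (P $$ (j,j))\<^sup>2 + (\<Sum>l\<in>{..<n}-{j}. (P $$ (j,l))\<^sup>2)"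
    using j by (simp add: sum.remove)
  ultimately have "(\<Sum>l\<in>{..<n}-{j}. (P $$ (j,l))\<^sup>2) = 0" using one by simp
  then have "\<forall>l\<in>{..<n}-{j}. (P $$ (j,l))\<^sup>2 = 0" by (subst sum_nonneg_eq_0_iff[symmetric]) auto
  then show "P $$ (j,k) = 0" using k by auto
  then show "P $$ (k,j) = 0" using proj_sym_entry[OF P j k(1)] by simp
qed

lemma proj_idem_assoc: "proj n P \<Longrightarrow> A \<in> carrier_mat n n \<Longrightarrow> P * (P * A) = P * A"
  unfolding proj_def by (metis sq_assoc)

lemma core:
  fixes n r :: nat and G Pm F :: "real mat" and lf :: "nat \<Rightarrow> real" and sig :: real
  assumes r1: "1 \<le> r" and rn: "r \<le> n"
  and G: "proj n G" and Pm: "proj n Pm" and trG: "mtrace G = r" and trP: "mtrace Pm = r"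
  and lf_nn: "\<forall>i. 0 \<le> lf i" and lf_mono: "\<forall>i j. i \<le> j \<longrightarrow> lf j \<le> lf i"
  and lf_zero: "\<forall>i\<ge>n. lf i = 0"
  and Fc: "F \<in> carrier_mat n n" and sig: "0 \<le> sig"
  and Fb1: "\<forall>A \<in> carrier_mat n n. hsq (F * A) \<le> sig\<^sup>2 * hsq A"
  and Fb2: "\<forall>A \<in> carrier_mat n n. hsq (transpose_mat F * A) \<le> sig\<^sup>2 * hsq A"
  and maxi: "(\<Sum>i<r. (lf i)\<^sup>2) \<le> (\<Sum>i<n. G $$ (i,i) * (lf i)\<^sup>2)"
  defines "Z \<equiv> (\<Sum>i<n. (Pm $$ (i,i) - G $$ (i,i)) * (lf i)\<^sup>2)
               + 2 * mtrace (transpose_mat F * (Pm - G) * mat_diag n lf)"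
  shows "Z \<le> 4 * real (min r (n-r)) * lf 0 * sig"
    and "lf r < lf (r-1) \<Longrightarrow> Z \<le> 4 * real (min r (n - r)) * (lf 0)\<^sup>2 / ((lf (r-1))\<^sup>2 - (lf r)\<^sup>2) * sig\<^sup>2"
    and "Z \<le> max (4 * sqrt (real (min r (n-r)) * (\<Sum>i\<in>{r..<2*r}. (lf i)\<^sup>2)) * sig) (4 * real (min r (n-r)) * sig\<^sup>2)"
proof -
  define d where "d = (\<lambda>i. (lf i)\<^sup>2)"
  define g where "g = (\<lambda>i. G $$ (i,i))"
  define Dg where "Dg = mat_diag n lf"
  define Lam where "Lam = mat_diag n d"
  define K where "K = 1\<^sub>m n - G"
  define L where "L = 1\<^sub>m n - Pm"
  define X where "X = Pm * K * Dg"
  define Y where "Y = L * G * Dg"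
  define w where "w = hsq X"
  define u where "u = hsq Y"
  define t where "t = r - mtrace (Pm * G)"
  define h where "h = (\<lambda>i. (K * Pm * K) $$ (i,i))"
  define e where "e = (\<lambda>i. (G * L * G) $$ (i,i))"
  define de where "de = d (r-1)"
  define m where "m = min r (n-r)"
  have Gc[simp]: "G \<in> carrier_mat n n" and Pc[simp]: "Pm \<in> carrier_mat n n"
    using G Pm proj_def by auto
  have Dc[simp]: "Dg \<in> carrier_mat n n" and Lamc[simp]: "Lam \<in> carrier_mat n n"
    and Kc[simp]: "K \<in> carrier_mat n n" and Lc[simp]: "L \<in> carrier_mat n n"
    unfolding Dg_def Lam_def K_def L_def by (auto simp: minus_carrier_mat)
  have Xc[simp]: "X \<in> carrier_mat n n" and Yc[simp]: "Y \<in> carrier_mat n n"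
    unfolding X_def Y_def by (auto simp: cm)
  have dims[simp]: "dim_row G = n" "dim_col G = n" "dim_row Pm = n" "dim_col Pm = n"
    "dim_row Dg = n" "dim_col Dg = n" "dim_row Lam = n" "dim_col Lam = n"
    "dim_row K = n" "dim_col K = n" "dim_row L = n" "dim_col L = n"
    "dim_row X = n" "dim_col X = n" "dim_row Y = n" "dim_col Y = n"
    using Gc Pc Dc Lamc Kc Lc Xc Yc by (auto simp del: Gc Pc Dc Lamc Kc Lc Xc Yc)
  have d_mono: "\<forall>i j. i \<le> j \<longrightarrow> d j \<le> d i"
    using lf_mono lf_nn unfolding d_def by (auto intro: power_mono)
  have d_nn: "\<forall>i. 0 \<le> d i" unfolding d_def by auto
  have d_zero: "\<forall>i\<ge>n. d i = 0" using lf_zero unfolding d_def by auto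
  have sqm: "sqrt m = min (sqrt r) (sqrt (n - r))" unfolding m_def by (auto simp: min_def)
  have g01: "\<forall>i<n. 0 \<le> g i \<and> g i \<le> 1"
    using proj_diag_nonneg[OF G] proj_diag_le1[OF G] unfolding g_def by auto
  have gs: "(\<Sum>i<n. g i) = r" using trG Gc unfolding g_def mtrace_def by (simp add: carrier_matD)
  define f where "f = (\<lambda>i. if i < r then (1 - g i) * (d i - de) else g i * (de - d i))"
  have f0: "\<forall>i\<in>{..<n}. 0 \<le> f i"
  proof
    fix i assume "i \<in> {..<n}"
    then have i: "i < n" by auto
    show "0 \<le> f i"
    proof (cases "i < r")
      case True
      then have "de \<le> d i" unfolding de_def using d_mono by auto
      then show ?thesis using True g01 i unfolding f_def by auto
    next
      case False
      then have "d i \<le> de" unfolding de_def using d_mono by auto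
      then show ?thesis using False g01 i unfolding f_def by auto
    qed
  qed
  have fsum: "(\<Sum>i<n. f i) = (\<Sum>i<r. d i) - (\<Sum>i<n. g i * d i)"
  proof -
    have "(\<Sum>i<n. f i) = (\<Sum>i<r. f i) + (\<Sum>i\<in>{r..<n}. f i)" by (rule sum_split_at[OF rn])
    also have "(\<Sum>i<r. f i) = (\<Sum>i<r. d i) - (\<Sum>i<r. g i * d i) - de * (r - (\<Sum>i<r. g i))"
      by (simp add: f_def algebra_simps sum_subtractf sum.distrib sum_distrib_left)
    also have "(\<Sum>i\<in>{r..<n}. f i) = de * (\<Sum>i\<in>{r..<n}. g i) - (\<Sum>i\<in>{r..<n}. g i * d i)"
      by (simp add: f_def algebra_simps sum_subtractf sum_distrib_left)
    also have "(\<Sum>i\<in>{r..<n}. g i) = r - (\<Sum>i<r. g i)" using sum_split_at[OF rn, of g] gs by simp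
    also have "(\<Sum>i\<in>{r..<n}. g i * d i) = (\<Sum>i<n. g i * d i) - (\<Sum>i<r. g i * d i)"
      using sum_split_at[OF rn, of "\<lambda>i. g i * d i"] by simp
    finally show ?thesis by (simp add: algebra_simps)
  qed
  have "(\<Sum>i<n. f i) \<le> 0" using fsum maxi unfolding g_def d_def by simp
  then have fz: "\<forall>i\<in>{..<n}. f i = 0"
    using sum_nonneg_eq_0_iff[of "{..<n}" f] f0 sum_nonneg[of "{..<n}" f] by auto
  have str1: "\<forall>i<n. g i < 1 \<longrightarrow> d i \<le> de"
  proof (intro allI impI)
    fix i assume i: "i < n" and gi: "g i < 1"
    show "d i \<le> de"
    proof (cases "i < r")
      case True
      have "f i = 0" using fz i by auto
      then have "(1 - g i) * (d i - de) = 0" using True unfolding f_def by simp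
      then show ?thesis using gi by auto
    next
      case False
      then show ?thesis unfolding de_def using d_mono by auto
    qed
  qed
  have str2: "\<forall>i<n. 0 < g i \<longrightarrow> de \<le> d i"
  proof (intro allI impI)
    fix i assume i: "i < n" and gi: "0 < g i"
    show "de \<le> d i"
    proof (cases "i < r")
      case False
      have "f i = 0" using fz i by auto
      then have "g i * (de - d i) = 0" using False unfolding f_def by simp
      then show ?thesis using gi by auto
    next
      case True
      then show ?thesis unfolding de_def using d_mono by auto
    qed
  qed
  have Gent: "G $$ (i,j) = 0" if "i < n" "j < n" "i \<noteq> j" "g j = 0 \<or> g j = 1" for i j
    using that proj_diag_zero[OF G, of j i] proj_diag_one[OF G, of j i] unfolding g_def by auto
  have GD: "G * Dg = Dg * G"
  proof (rule eq_matI)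
    fix i j assume "i < dim_row (Dg * G)" "j < dim_col (Dg * G)"
    then have ij: "i < n" "j < n" by auto
    have "G $$ (i,j) * lf j = lf i * G $$ (i,j)"
    proof (cases "G $$ (i,j) = 0 \<or> i = j")
      case True then show ?thesis by auto
    next
      case False
      then have ne: "G $$ (i,j) \<noteq> 0" "i \<noteq> j" by auto
      then have "\<not> (g j = 0 \<or> g j = 1)" using Gent ij by auto
      then have "0 < g j \<and> g j < 1" using g01 ij by (auto simp: less_le)
      then have dj: "d j = de" using str1 str2 ij by (meson order.antisym)
      have "G $$ (j,i) \<noteq> 0" using ne proj_sym_entry[OF G ij] by simp
      then have "\<not> (g i = 0 \<or> g i = 1)" using Gent ij ne by auto
      then have "0 < g i \<and> g i < 1" using g01 ij by (auto simp: less_le)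
      then have di: "d i = de" using str1 str2 ij by (meson order.antisym)
      have "lf i = lf j" using di dj lf_nn unfolding d_def by (metis power2_eq_iff_nonneg)
      then show ?thesis by simp
    qed
    then show "(G * Dg) $$ (i,j) = (Dg * G) $$ (i,j)"
      using ij unfolding Dg_def by (simp add: mat_diag_mult_left[of G n n] mat_diag_mult_right[of G n n])
  qed auto
  have KD: "K * Dg = Dg * K"
    unfolding K_def using GD by (simp add: sq_ldist[of _ n] sq_rdist[of _ n])
  have DD: "Dg * Dg = Lam" unfolding Dg_def Lam_def d_def by (simp add: power2_eq_square)
  have GLam: "G * Lam = Lam * G"
  proof -
    have "G * Lam = (G * Dg) * Dg" using DD by (simp add: sq_assoc[of _ n])
    also have "\<dots> = Dg * (G * Dg)" using GD by (simp add: sq_assoc[of _ n])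
    also have "\<dots> = Lam * G" using GD DD by (simp add: sq_assoc[of _ n, symmetric])
    finally show ?thesis .
  qed
  have Gt: "transpose_mat G = G" and Pt: "transpose_mat Pm = Pm" using G Pm proj_def by auto
  have Kt: "transpose_mat K = K" unfolding K_def using Gt by (simp add: sq_tminus[of _ n])
  have Lt: "transpose_mat L = L" unfolding L_def using Pt by (simp add: sq_tminus[of _ n])
  have Dt: "transpose_mat Dg = Dg" unfolding Dg_def by (rule transpose_diag)
  have K: "proj n K" unfolding K_def by (rule proj_compl[OF G])
  have L: "proj n L" unfolding L_def by (rule proj_compl[OF Pm])
  have wtr: "w = mtrace ((K * Pm * K) * Lam)"
  proof -
    have "w = mtrace (Dg * (K * (Pm * (K * Dg))))"
      unfolding w_def hsq_def X_def using Kt Pt Dt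
      by (simp add: sq_tmult[of _ n] sq_assoc[of _ n] cm proj_idem_assoc[OF Pm])
    also have "\<dots> = mtrace ((K * (Pm * (K * Dg))) * Dg)" by (rule mtrace_mult_comm) (auto simp: cm)
    also have "\<dots> = mtrace ((K * Pm * K) * Lam)" using DD by (simp add: sq_assoc[of _ n] cm)
    finally show ?thesis .
  qed
  have w_eq: "w = (\<Sum>i<n. h i * d i)"
    unfolding wtr Lam_def h_def by (rule mtrace_diag_right) (auto simp: cm)
  have utr: "u = mtrace ((G * L * G) * Lam)"
  proof -
    have "u = mtrace (Dg * (G * (L * (G * Dg))))"
      unfolding u_def hsq_def Y_def using Gt Lt Dt
      by (simp add: sq_tmult[of _ n] sq_assoc[of _ n] cm proj_idem_assoc[OF L])
    also have "\<dots> = mtrace ((G * (L * (G * Dg))) * Dg)" by (rule mtrace_mult_comm) (auto simp: cm)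
    also have "\<dots> = mtrace ((G * L * G) * Lam)" using DD by (simp add: sq_assoc[of _ n] cm)
    finally show ?thesis .
  qed
  have u_eq: "u = (\<Sum>i<n. e i * d i)"
    unfolding utr Lam_def e_def by (rule mtrace_diag_right) (auto simp: cm)
  have w0: "0 \<le> w" unfolding w_def by (rule hsq_nonneg[OF Xc])
  have u0: "0 \<le> u" unfolding u_def by (rule hsq_nonneg[OF Yc])
  have w2: "w = mtrace (Pm * Lam) - mtrace (Pm * (G * Lam)) - (mtrace (G * (Pm * Lam)) - mtrace (G * (Pm * (G * Lam))))"
    using wtr unfolding K_def
    by (simp add: sq_ldist[of _ n] sq_rdist[of _ n] sq_assoc[of _ n] cm mtrace_minus[of _ n] sq_one_l[of _ n] sq_one_r[of _ n])
  have u2: "u = mtrace (G * Lam) - mtrace (G * (Pm * (G * Lam)))"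
    using utr unfolding L_def
    by (simp add: sq_ldist[of _ n] sq_rdist[of _ n] sq_assoc[of _ n] cm mtrace_minus[of _ n] sq_one_l[of _ n] sq_one_r[of _ n]
        proj_idem_assoc[OF G])
  have c1: "mtrace (Pm * (G * Lam)) = mtrace (G * (Pm * Lam))"
  proof -
    have "mtrace (Pm * (G * Lam)) = mtrace ((Pm * Lam) * G)" using GLam by (simp add: sq_assoc[of _ n] cm)
    also have "\<dots> = mtrace (G * (Pm * Lam))" by (rule mtrace_mult_comm) (auto simp: cm)
    finally show ?thesis .
  qed
  have c2: "mtrace (G * (Pm * (G * Lam))) = mtrace (G * (Pm * Lam))"
  proof -
    have "mtrace (G * (Pm * (G * Lam))) = mtrace ((G * Pm * Lam) * G)" using GLam by (simp add: sq_assoc[of _ n] cm)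
    also have "\<dots> = mtrace (G * (G * Pm * Lam))" by (rule mtrace_mult_comm) (auto simp: cm)
    also have "\<dots> = mtrace (G * (Pm * Lam))" by (simp add: sq_assoc[of _ n] cm proj_idem_assoc[OF G])
    finally show ?thesis .
  qed
  have first: "(\<Sum>i<n. (Pm $$ (i,i) - G $$ (i,i)) * (lf i)\<^sup>2) = w - u"
  proof -
    have "(\<Sum>i<n. (Pm $$ (i,i) - G $$ (i,i)) * (lf i)\<^sup>2) = mtrace (Pm * Lam) - mtrace (G * Lam)"
      unfolding Lam_def d_def by (simp add: mtrace_diag_right[of _ n] left_diff_distrib sum_subtractf)
    then show ?thesis using w2 u2 c1 c2 by simp
  qed
  have hs: "(\<Sum>i<n. h i) = t"
  proof -
    have "(\<Sum>i<n. h i) = mtrace (K * (Pm * K))" unfolding h_def mtrace_def by (simp add: sq_assoc[of _ n] cm)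
    also have "\<dots> = mtrace ((Pm * K) * K)" by (rule mtrace_mult_comm) (auto simp: cm)
    also have "\<dots> = mtrace (Pm * K)" using K unfolding proj_def by (simp add: sq_assoc[of _ n] cm)
    also have "\<dots> = t" unfolding t_def K_def using trP
      by (simp add: sq_rdist[of _ n] mtrace_minus[of _ n] cm sq_one_r[of _ n])
    finally show ?thesis .
  qed
  have es: "(\<Sum>i<n. e i) = t"
  proof -
    have "(\<Sum>i<n. e i) = mtrace (G * (L * G))" unfolding e_def mtrace_def by (simp add: sq_assoc[of _ n] cm)
    also have "\<dots> = mtrace ((L * G) * G)" by (rule mtrace_mult_comm) (auto simp: cm)
    also have "\<dots> = mtrace (L * G)" using G unfolding proj_def by (simp add: sq_assoc[of _ n] cm)
    also have "\<dots> = t" unfolding t_def L_def using trG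
      by (simp add: sq_ldist[of _ n] mtrace_minus[of _ n] cm sq_one_l[of _ n])
    finally show ?thesis .
  qed
  have KPK: "K * Pm * K = transpose_mat (Pm * K) * (Pm * K)"
    using Kt Pt by (simp add: sq_tmult[of _ n] sq_assoc[of _ n] cm proj_idem_assoc[OF Pm])
  have KLK: "K * L * K = transpose_mat (L * K) * (L * K)"
    using Kt Lt by (simp add: sq_tmult[of _ n] sq_assoc[of _ n] cm proj_idem_assoc[OF L])
  have GLG: "G * L * G = transpose_mat (L * G) * (L * G)"
    using Gt Lt by (simp add: sq_tmult[of _ n] sq_assoc[of _ n] cm proj_idem_assoc[OF L])
  have GPG: "G * Pm * G = transpose_mat (Pm * G) * (Pm * G)"
    using Gt Pt by (simp add: sq_tmult[of _ n] sq_assoc[of _ n] cm proj_idem_assoc[OF Pm])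
  have KLK2: "K * L * K = K - K * Pm * K"
    unfolding L_def using K unfolding proj_def
    by (simp add: sq_ldist[of _ n] sq_rdist[of _ n] sq_assoc[of _ n] cm sq_one_l[of _ n] sq_one_r[of _ n])
  have GLG2: "G * L * G = G - G * Pm * G"
    unfolding L_def using G unfolding proj_def
    by (simp add: sq_ldist[of _ n] sq_rdist[of _ n] sq_assoc[of _ n] cm sq_one_l[of _ n] sq_one_r[of _ n])
  have h01: "\<forall>i<n. 0 \<le> h i \<and> h i \<le> 1 - g i"
  proof (intro allI impI conjI)
    fix i assume i: "i < n"
    show "0 \<le> h i" unfolding h_def KPK by (rule diag_tAA_nonneg[OF _ i]) (auto simp: cm)
    have "0 \<le> (K * L * K) $$ (i,i)" unfolding KLK by (rule diag_tAA_nonneg[OF _ i]) (auto simp: cm)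
    moreover have "(K * L * K) $$ (i,i) = K $$ (i,i) - h i" unfolding KLK2 h_def using i by (simp add: cm)
    moreover have "K $$ (i,i) = 1 - g i" unfolding K_def g_def using i by simp
    ultimately show "h i \<le> 1 - g i" by simp
  qed
  have e01: "\<forall>i<n. 0 \<le> e i \<and> e i \<le> g i"
  proof (intro allI impI conjI)
    fix i assume i: "i < n"
    show "0 \<le> e i" unfolding e_def GLG by (rule diag_tAA_nonneg[OF _ i]) (auto simp: cm)
    have "0 \<le> (G * Pm * G) $$ (i,i)" unfolding GPG by (rule diag_tAA_nonneg[OF _ i]) (auto simp: cm)
    then show "e i \<le> g i" unfolding GLG2 e_def g_def using i by (simp add: cm)
  qed
  have PG: "Pm * K - L * G = Pm - G"
  proof -
    have "Pm * K - L * G = Pm - Pm * G - (G - Pm * G)" unfolding K_def L_def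
      by (simp add: sq_ldist[of _ n] sq_rdist[of _ n] cm sq_one_l[of _ n] sq_one_r[of _ n])
    also have "\<dots> = Pm - G" by (rule eq_matI) (auto simp: cm)
    finally show ?thesis .
  qed
  have Fc'[simp]: "transpose_mat F \<in> carrier_mat n n" "F \<in> carrier_mat n n" using Fc by simp_all
  have bsplit: "mtrace (transpose_mat F * (Pm - G) * mat_diag n lf) = mtrace (transpose_mat F * X) - mtrace (transpose_mat F * Y)"
  proof -
    have "transpose_mat F * (Pm - G) * mat_diag n lf = transpose_mat F * ((Pm * K - L * G) * Dg)"
      unfolding PG Dg_def by (simp add: sq_assoc[of _ n] cm minus_carrier_mat)
    also have "\<dots> = transpose_mat F * X - transpose_mat F * Y"
      unfolding X_def Y_def by (simp add: sq_ldist[of _ n] sq_rdist[of _ n] sq_assoc[of _ n] cm)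
    finally show ?thesis by (simp add: mtrace_minus[of _ n] cm)
  qed
  have trK: "mtrace K = real n - real r" unfolding K_def using trG rn
    by (simp add: mtrace_minus[of _ n] mtrace_one)
  have trL: "mtrace L = real n - real r" unfolding L_def using trP rn
    by (simp add: mtrace_minus[of _ n] mtrace_one)
  have nr: "real (n - r) = real n - real r" using rn by simp
  have b1: "\<bar>mtrace (transpose_mat F * X)\<bar> \<le> sig * sqrt m * sqrt w"
  proof -
    have PX: "Pm * X = X" unfolding X_def by (simp add: sq_assoc[of _ n] cm proj_idem_assoc[OF Pm])
    have XK: "X * K = X" unfolding X_def using KD K unfolding proj_def
      by (simp add: sq_assoc[of _ n] cm proj_idem_assoc[OF K])
    have 1: "\<bar>mtrace (transpose_mat F * X)\<bar> \<le> sig * sqrt r * sqrt w"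
      using L1_left[OF Pm Xc PX Fc Fb2 sig] trP unfolding w_def by simp
    have 2: "\<bar>mtrace (transpose_mat F * X)\<bar> \<le> sig * sqrt (n - r) * sqrt w"
      using L1_right[OF K Xc XK Fc Fb1 sig] trK nr unfolding w_def by simp
    show ?thesis using 1 2 unfolding sqm by (simp add: min_def)
  qed
  have b2: "\<bar>mtrace (transpose_mat F * Y)\<bar> \<le> sig * sqrt m * sqrt u"
  proof -
    have LY: "L * Y = Y" unfolding Y_def by (simp add: sq_assoc[of _ n] cm proj_idem_assoc[OF L])
    have YG: "Y * G = Y" unfolding Y_def using GD G unfolding proj_def
      by (simp add: sq_assoc[of _ n] cm proj_idem_assoc[OF G])
    have 1: "\<bar>mtrace (transpose_mat F * Y)\<bar> \<le> sig * sqrt r * sqrt u"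
      using L1_right[OF G Yc YG Fc Fb1 sig] trG unfolding u_def by simp
    have 2: "\<bar>mtrace (transpose_mat F * Y)\<bar> \<le> sig * sqrt (n - r) * sqrt u"
      using L1_left[OF L Yc LY Fc Fb2 sig] trL nr unfolding u_def by simp
    show ?thesis using 1 2 unfolding sqm by (simp add: min_def)
  qed
  have t0: "0 \<le> t" using hs h01 by (metis lessThan_iff sum_nonneg)
  have tr: "t \<le> r"
  proof -
    have "(\<Sum>i<n. e i) \<le> (\<Sum>i<n. g i)" using e01 by (intro sum_mono) auto
    then show ?thesis using es gs by simp
  qed
  have tnr: "t \<le> real n - real r"
  proof -
    have "(\<Sum>i<n. h i) \<le> (\<Sum>i<n. 1 - g i)" using h01 by (intro sum_mono) auto
    then show ?thesis using hs gs by (simp add: sum_subtractf)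
  qed
  have tm: "t \<le> m" unfolding m_def using tr tnr nr by simp
  have hsc: "(\<Sum>i<n. h i * c) = c * t" for c
  proof -
    have "(\<Sum>i<n. h i * c) = (\<Sum>i<n. h i) * c" by (rule sum_distrib_right[symmetric])
    then show ?thesis using hs by simp
  qed
  have esc: "(\<Sum>i<n. e i * c) = c * t" for c
  proof -
    have "(\<Sum>i<n. e i * c) = (\<Sum>i<n. e i) * c" by (rule sum_distrib_right[symmetric])
    then show ?thesis using es by simp
  qed
  have w_de: "w \<le> de * t"
  proof -
    have "h i * d i \<le> h i * de" if i: "i < n" for i
    proof (cases "h i = 0")
      case False
      then have "g i < 1" using h01 i by force
      then show ?thesis using str1 i h01 by (simp add: mult_left_mono)
    qed simp
    then have "(\<Sum>i<n. h i * d i) \<le> (\<Sum>i<n. h i * de)" by (intro sum_mono) auto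
    then show ?thesis using w_eq hsc by simp
  qed
  have u_de: "de * t \<le> u"
  proof -
    have "e i * de \<le> e i * d i" if i: "i < n" for i
    proof (cases "e i = 0")
      case False
      then have "0 < g i" using e01 i by force
      then show ?thesis using str2 i e01 by (simp add: mult_left_mono)
    qed simp
    then have "(\<Sum>i<n. e i * de) \<le> (\<Sum>i<n. e i * d i)" by (intro sum_mono) auto
    then show ?thesis using u_eq esc by simp
  qed
  have d0: "d i \<le> (lf 0)\<^sup>2" for i using d_mono unfolding d_def by auto
  have w_top: "w \<le> (lf 0)\<^sup>2 * t"
  proof -
    have "(\<Sum>i<n. h i * d i) \<le> (\<Sum>i<n. h i * (lf 0)\<^sup>2)" using h01 d0 by (intro sum_mono mult_left_mono) auto
    then show ?thesis using w_eq hsc by simp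
  qed
  have u_top: "u \<le> (lf 0)\<^sup>2 * t"
  proof -
    have "(\<Sum>i<n. e i * d i) \<le> (\<Sum>i<n. e i * (lf 0)\<^sup>2)" using e01 d0 by (intro sum_mono mult_left_mono) auto
    then show ?thesis using u_eq esc by simp
  qed
  have w_gap: "lf r < lf (r-1) \<Longrightarrow> w \<le> (lf r)\<^sup>2 * t"
  proof -
    assume gap: "lf r < lf (r-1)"
    have dr: "d r < de" unfolding d_def de_def using gap lf_nn by (simp add: power_strict_mono)
    have gz: "g i = 0" if "r \<le> i" "i < n" for i
    proof -
      have "d i \<le> d r" using d_mono that by auto
      then have "\<not> 0 < g i" using str2 that dr by force
      then show ?thesis using g01 that by force
    qed
    have "(\<Sum>i\<in>{r..<n}. g i) = 0" using gz by (intro sum.neutral) auto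
    then have "(\<Sum>i<r. g i) = r" using sum_split_at[OF rn, of g] gs by simp
    then have "(\<Sum>i<r. 1 - g i) = 0" by (simp add: sum_subtractf)
    then have "\<forall>i\<in>{..<r}. 1 - g i = 0" using g01 rn by (subst sum_nonneg_eq_0_iff[symmetric]) auto
    then have hz: "h i = 0" if "i < r" for i
    proof -
      have "i < n" using that rn by auto
      moreover have "1 - g i = 0" using \<open>\<forall>i\<in>{..<r}. 1 - g i = 0\<close> that by auto
      ultimately show ?thesis using h01 by (metis order.antisym)
    qed
    have "h i * d i \<le> h i * d r" if i: "i < n" for i
    proof (cases "i < r")
      case True then show ?thesis using hz by simp
    next
      case False then show ?thesis using d_mono h01 i by (simp add: mult_left_mono)
    qed
    then have "(\<Sum>i<n. h i * d i) \<le> (\<Sum>i<n. h i * d r)" by (intro sum_mono) auto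
    then show ?thesis using w_eq hsc unfolding d_def by simp
  qed
  have w_Delta: "w \<le> (\<Sum>i\<in>{r..<2*r}. (lf i)\<^sup>2)"
  proof -
    have "(\<Sum>i<n. d i * h i) \<le> (\<Sum>i\<in>{r..<2*r}. d i)"
      by (rule knapsack[OF r1 rn d_mono d_nn d_zero g01 gs h01 _ str1[unfolded de_def] str2[unfolded de_def]])
        (use hs tr in simp)
    then show ?thesis using w_eq unfolding d_def by (simp add: mult.commute)
  qed
  define s where "s = 2 * sig * sqrt m"
  define p where "p = sqrt w"
  define q where "q = sqrt u"
  have s0: "0 \<le> s" unfolding s_def using sig by auto
  have p0: "0 \<le> p" unfolding p_def using w0 by auto
  have pq: "p \<le> q" unfolding p_def q_def using w_de u_de by auto
  have pw: "p\<^sup>2 = w" unfolding p_def using w0 by simp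
  have qu: "q\<^sup>2 = u" unfolding q_def using u0 by simp
  have Zle: "Z \<le> p\<^sup>2 - q\<^sup>2 + s * (p + q)"
  proof -
    have "Z = (w - u) + 2 * (mtrace (transpose_mat F * X) - mtrace (transpose_mat F * Y))"
      unfolding Z_def first bsplit by simp
    then show ?thesis using b1 b2 pw qu unfolding s_def p_def q_def by (simp add: algebra_simps abs_le_iff)
  qed
  have lft: "sqrt ((lf 0)\<^sup>2 * t) = lf 0 * sqrt t" using lf_nn by (simp add: real_sqrt_mult)
  have p_top: "p \<le> lf 0 * sqrt t" unfolding p_def using w_top lft by (metis real_sqrt_le_mono)
  have q_top: "q \<le> lf 0 * sqrt t" unfolding q_def using u_top lft by (metis real_sqrt_le_mono)
  have stm: "sqrt t \<le> sqrt m" using tm by simp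
  show "Z \<le> 4 * real (min r (n-r)) * lf 0 * sig"
  proof -
    have "p\<^sup>2 - q\<^sup>2 + s * (p + q) \<le> 2 * s * (lf 0 * sqrt m)"
      using arith_I[OF pq s0 p0 p_top q_top] lf_nn stm by (simp add: mult_left_mono)
    also have "2 * s * (lf 0 * sqrt m) = 4 * real m * lf 0 * sig"
      unfolding s_def by (simp add: algebra_simps)
    finally show ?thesis using Zle m_def by simp
  qed
  show "lf r < lf (r-1) \<Longrightarrow> Z \<le> 4 * real (min r (n - r)) * (lf 0)\<^sup>2 / ((lf (r-1))\<^sup>2 - (lf r)\<^sup>2) * sig\<^sup>2"
  proof -
    assume gap: "lf r < lf (r-1)"
    define gm where "gm = (lf (r-1))\<^sup>2 - (lf r)\<^sup>2"
    have gm0: "0 < gm" unfolding gm_def using gap lf_nn by (simp add: power_strict_mono)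
    have "Z \<le> p\<^sup>2 - q\<^sup>2 + s * (p + q)" by (rule Zle)
    also have "\<dots> \<le> - gm * (sqrt t)\<^sup>2 + 2 * s * lf 0 * sqrt t"
    proof -
      have "p\<^sup>2 - q\<^sup>2 \<le> - gm * t" using pw qu w_gap[OF gap] u_de unfolding gm_def de_def d_def
        by (simp add: algebra_simps)
      moreover have "s * (p + q) \<le> s * (2 * lf 0 * sqrt t)" using p_top q_top s0 by (intro mult_left_mono) auto
      ultimately show ?thesis using t0 by (simp add: algebra_simps)
    qed
    also have "\<dots> \<le> (s * lf 0)\<^sup>2 / gm" by (rule arith_II[OF gm0])
    also have "(s * lf 0)\<^sup>2 / gm = 4 * real m * (lf 0)\<^sup>2 / gm * sig\<^sup>2"
      unfolding s_def using tm t0 by (simp add: power_mult_distrib algebra_simps)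
    finally show ?thesis unfolding gm_def m_def .
  qed
  show "Z \<le> max (4 * sqrt (real (min r (n-r)) * (\<Sum>i\<in>{r..<2*r}. (lf i)\<^sup>2)) * sig) (4 * real (min r (n-r)) * sig\<^sup>2)"
  proof -
    have "Z \<le> max (2 * s * sqrt (\<Sum>i\<in>{r..<2*r}. (lf i)\<^sup>2)) (s\<^sup>2)"
      using Zle arith_III[OF p0 pq s0, of "\<Sum>i\<in>{r..<2*r}. (lf i)\<^sup>2"] pw w_Delta by simp
    also have "2 * s * sqrt (\<Sum>i\<in>{r..<2*r}. (lf i)\<^sup>2) = 4 * sqrt (real m * (\<Sum>i\<in>{r..<2*r}. (lf i)\<^sup>2)) * sig"
      unfolding s_def by (simp add: real_sqrt_mult)
    also have "s\<^sup>2 = 4 * real m * sig\<^sup>2" unfolding s_def by (simp add: power_mult_distrib)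
    finally show ?thesis unfolding m_def .
  qed
qed

lemma orth_right: "orth_mat n U \<Longrightarrow> U * transpose_mat U = 1\<^sub>m n"
  unfolding orth_mat_def using mat_mult_left_right_inverse[of "transpose_mat U" n U] by auto

lemma hsq_orth: assumes W: "W \<in> carrier_mat n n" "transpose_mat W * W = 1\<^sub>m n" and A: "A \<in> carrier_mat n n"
  shows "hsq (W * A) = hsq A"
proof -
  have "transpose_mat W * (W * A) = A" using W A by (simp add: sq_assoc[of _ n, symmetric] cm)
  then show ?thesis unfolding hsq_def using W A by (simp add: sq_tmult[of _ n] sq_assoc[of _ n] cm)
qed

lemma hsq_diag: assumes f: "\<forall>i<n. \<bar>f i\<bar> \<le> s" and A: "A \<in> carrier_mat n n"
  shows "hsq (mat_diag n f * A) \<le> s\<^sup>2 * hsq A"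
proof -
  have "hsq (mat_diag n f * A) = (\<Sum>j<n. \<Sum>i<n. (f i * A $$ (i,j))\<^sup>2)"
    using A by (simp add: hsq_sum[of _ n n] mat_diag_mult_left[of A n n])
  also have "\<dots> \<le> (\<Sum>j<n. \<Sum>i<n. s\<^sup>2 * (A $$ (i,j))\<^sup>2)"
  proof (intro sum_mono)
    fix i j assume "i \<in> {..<n}"
    then have "(f i)\<^sup>2 \<le> s\<^sup>2" using f by (simp add: abs_le_square_iff[symmetric]) (use f in \<open>auto intro: order.trans\<close>)
    then show "(f i * A $$ (i,j))\<^sup>2 \<le> s\<^sup>2 * (A $$ (i,j))\<^sup>2"
      by (simp add: power_mult_distrib mult_right_mono)
  qed
  also have "\<dots> = s\<^sup>2 * hsq A" using A by (simp add: hsq_sum[of _ n n] sum_distrib_left)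
  finally show ?thesis .
qed

lemma proj_conj: assumes Q: "proj n Q" and U: "orth_mat n U"
  shows "proj n (transpose_mat U * Q * U)" "mtrace (transpose_mat U * Q * U) = mtrace Q"
proof -
  have Uc[simp]: "U \<in> carrier_mat n n" and Qc[simp]: "Q \<in> carrier_mat n n" using Q U unfolding proj_def orth_mat_def by auto
  have UU: "U * transpose_mat U = 1\<^sub>m n" by (rule orth_right[OF U])
  have Qt: "transpose_mat Q = Q" and QQ: "Q * Q = Q" using Q proj_def by auto
  have "transpose_mat U * Q * U * (transpose_mat U * Q * U) = transpose_mat U * (Q * ((U * transpose_mat U) * (Q * U)))"
    by (simp add: sq_assoc[of _ n] cm)
  also have "\<dots> = transpose_mat U * Q * U"
  proof -
    have "(U * transpose_mat U) * (Q * U) = Q * U" using UU by (simp add: cm sq_one_l[of _ n])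
    then show ?thesis using proj_idem_assoc[OF Q, of U] by (simp add: sq_assoc[of _ n] cm)
  qed
  finally have "transpose_mat U * Q * U * (transpose_mat U * Q * U) = transpose_mat U * Q * U" .
  moreover have "transpose_mat (transpose_mat U * Q * U) = transpose_mat U * Q * U"
    using Qt by (simp add: sq_tmult[of _ n] sq_assoc[of _ n] cm)
  ultimately show "proj n (transpose_mat U * Q * U)" unfolding proj_def by (simp add: cm)
  have "mtrace (transpose_mat U * Q * U) = mtrace (transpose_mat U * (Q * U))" by (simp add: sq_assoc[of _ n] cm)
  also have "\<dots> = mtrace ((Q * U) * transpose_mat U)" by (rule mtrace_mult_comm[of _ n n]) (auto simp: cm)
  also have "\<dots> = mtrace Q" using UU by (simp add: sq_assoc[of _ n] cm sq_one_r[of _ n])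
  finally show "mtrace (transpose_mat U * Q * U) = mtrace Q" .
qed

lemma hs_PC: assumes P: "proj n P" and U: "orth_mat n U" and V: "orth_mat n V"
  and C: "C = U * mat_diag n lf * transpose_mat V"
  shows "(hs_norm (P * C))\<^sup>2 = (\<Sum>i<n. (transpose_mat U * P * U) $$ (i,i) * (lf i)\<^sup>2)"
proof -
  have Uc[simp]: "U \<in> carrier_mat n n" and Vc[simp]: "V \<in> carrier_mat n n" and Pc[simp]: "P \<in> carrier_mat n n"
    using P U V unfolding proj_def orth_mat_def by auto
  have VV: "transpose_mat V * V = 1\<^sub>m n" using V orth_mat_def by auto
  have Pt: "transpose_mat P = P" and PP: "P * P = P" using P proj_def by auto
  define Dg where "Dg = mat_diag n lf"
  have Dc[simp]: "Dg \<in> carrier_mat n n" unfolding Dg_def by simp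
  have Dt: "transpose_mat Dg = Dg" unfolding Dg_def by (rule transpose_diag)
  have Cc[simp]: "C \<in> carrier_mat n n" unfolding C by (simp add: cm)
  have "(hs_norm (P * C))\<^sup>2 = hsq (P * C)" by (rule hs_norm_sq[of _ n n]) (simp add: cm)
  also have "\<dots> = mtrace (V * (Dg * (transpose_mat U * (P * (U * (Dg * (transpose_mat V)))))))"
    unfolding hsq_def C Dg_def[symmetric] using Pt Dt
    by (simp add: sq_tmult[of _ n] sq_assoc[of _ n] cm proj_idem_assoc[OF P])
  also have "\<dots> = mtrace ((Dg * (transpose_mat U * (P * (U * (Dg * (transpose_mat V)))))) * V)"
    by (rule mtrace_mult_comm[of _ n n]) (auto simp: cm)
  also have "\<dots> = mtrace (Dg * (transpose_mat U * (P * (U * Dg))))"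
  proof -
    have "Dg * (transpose_mat V * V) = Dg" using VV by (simp add: sq_one_r[of _ n])
    then show ?thesis by (simp add: sq_assoc[of _ n] cm)
  qed
  also have "\<dots> = mtrace ((transpose_mat U * (P * (U * Dg))) * Dg)"
    by (rule mtrace_mult_comm[of _ n n]) (auto simp: cm)
  also have "\<dots> = mtrace ((transpose_mat U * P * U) * (Dg * Dg))"
    by (simp add: sq_assoc[of _ n] cm)
  also have "\<dots> = mtrace ((transpose_mat U * P * U) * mat_diag n (\<lambda>i. (lf i)\<^sup>2))"
    unfolding Dg_def by (simp add: power2_eq_square)
  also have "\<dots> = (\<Sum>i<n. (transpose_mat U * P * U) $$ (i,i) * (lf i)\<^sup>2)"
    by (rule mtrace_diag_right) (auto simp: cm)
  finally show ?thesis .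
qed


lemma orth_transpose: "orth_mat n U \<Longrightarrow> orth_mat n (transpose_mat U)"
  using orth_right[of n U] unfolding orth_mat_def by auto

lemma orth_prod: assumes A: "orth_mat n A" and B: "orth_mat n B"
  shows "orth_mat n (transpose_mat A * B)"
proof -
  have Ac[simp]: "A \<in> carrier_mat n n" and Bc[simp]: "B \<in> carrier_mat n n" using A B orth_mat_def by auto
  have AA: "A * transpose_mat A = 1\<^sub>m n" by (rule orth_right[OF A])
  have BB: "transpose_mat B * B = 1\<^sub>m n" using B orth_mat_def by auto
  have "transpose_mat B * (A * (transpose_mat A * B)) = 1\<^sub>m n"
    using AA BB by (simp add: sq_assoc[of _ n, symmetric] cm sq_one_r[of _ n])
  then show ?thesis unfolding orth_mat_def by (simp add: sq_tmult[of _ n] sq_assoc[of _ n] cm)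
qed

lemma F_bound:
  assumes U: "orth_mat n U" and V: "orth_mat n V" and U2: "orth_mat n U2" and V2: "orth_mat n V2"
    and E: "E = U2 * mat_diag n f * transpose_mat V2" and f: "\<forall>i<n. \<bar>f i\<bar> \<le> s"
    and A: "A \<in> carrier_mat n n"
  shows "hsq ((transpose_mat U * E * V) * A) \<le> s\<^sup>2 * hsq A"
    "hsq (transpose_mat (transpose_mat U * E * V) * A) \<le> s\<^sup>2 * hsq A"
proof -
  have [simp]: "U \<in> carrier_mat n n" "V \<in> carrier_mat n n" "U2 \<in> carrier_mat n n" "V2 \<in> carrier_mat n n"
    using U V U2 V2 orth_mat_def by auto
  have oW1: "orth_mat n (transpose_mat U * U2)" by (rule orth_prod[OF U U2])
  have oW2: "orth_mat n (transpose_mat V2 * V)" by (rule orth_prod[OF V2 V])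
  have oW3: "orth_mat n (transpose_mat V * V2)" by (rule orth_prod[OF V V2])
  have oW4: "orth_mat n (transpose_mat U2 * U)" by (rule orth_prod[OF U2 U])
  have "(transpose_mat U * E * V) * A = (transpose_mat U * U2) * (mat_diag n f * ((transpose_mat V2 * V) * A))"
    unfolding E using A by (simp add: sq_assoc[of _ n] cm)
  then have "hsq ((transpose_mat U * E * V) * A) = hsq (mat_diag n f * ((transpose_mat V2 * V) * A))"
    using hsq_orth[of "transpose_mat U * U2" n] oW1 A unfolding orth_mat_def by (simp add: cm)
  also have "\<dots> \<le> s\<^sup>2 * hsq ((transpose_mat V2 * V) * A)" by (rule hsq_diag[OF f]) (use A in \<open>simp add: cm\<close>)
  also have "hsq ((transpose_mat V2 * V) * A) = hsq A"
    using hsq_orth[of "transpose_mat V2 * V" n] oW2 A unfolding orth_mat_def by (simp add: cm)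
  finally show "hsq ((transpose_mat U * E * V) * A) \<le> s\<^sup>2 * hsq A" .
  have "transpose_mat (transpose_mat U * E * V) * A = (transpose_mat V * V2) * (mat_diag n f * ((transpose_mat U2 * U) * A))"
    unfolding E using A by (simp add: sq_tmult[of _ n] sq_assoc[of _ n] cm transpose_diag)
  then have "hsq (transpose_mat (transpose_mat U * E * V) * A) = hsq (mat_diag n f * ((transpose_mat U2 * U) * A))"
    using hsq_orth[of "transpose_mat V * V2" n] oW3 A unfolding orth_mat_def by (simp add: cm)
  also have "\<dots> \<le> s\<^sup>2 * hsq ((transpose_mat U2 * U) * A)" by (rule hsq_diag[OF f]) (use A in \<open>simp add: cm\<close>)
  also have "hsq ((transpose_mat U2 * U) * A) = hsq A"
    using hsq_orth[of "transpose_mat U2 * U" n] oW4 A unfolding orth_mat_def by (simp add: cm)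
  finally show "hsq (transpose_mat (transpose_mat U * E * V) * A) \<le> s\<^sup>2 * hsq A" .
qed

lemma trace_term:
  assumes U: "orth_mat n U" and V: "orth_mat n V" and C: "C = U * mat_diag n lf * transpose_mat V"
    and P: "P \<in> carrier_mat n n" and Q: "Q \<in> carrier_mat n n" and E: "E \<in> carrier_mat n n"
  shows "mtrace (transpose_mat E * (P - Q) * C) =
    mtrace (transpose_mat (transpose_mat U * E * V) * (transpose_mat U * P * U - transpose_mat U * Q * U) * mat_diag n lf)"
proof -
  have [simp]: "U \<in> carrier_mat n n" "V \<in> carrier_mat n n" using U V orth_mat_def by auto
  have UU: "U * transpose_mat U = 1\<^sub>m n" by (rule orth_right[OF U])
  define Dd where "Dd = P - Q"
  have Dc[simp]: "Dd \<in> carrier_mat n n" unfolding Dd_def using P Q by (simp add: minus_carrier_mat)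
  have PQ: "transpose_mat U * P * U - transpose_mat U * Q * U = transpose_mat U * (Dd * U)"
    unfolding Dd_def using P Q by (simp add: sq_ldist[of _ n] sq_rdist[of _ n] sq_assoc[of _ n] cm)
  have "mtrace (transpose_mat (transpose_mat U * E * V) * (transpose_mat U * P * U - transpose_mat U * Q * U) * mat_diag n lf)
    = mtrace (transpose_mat V * (transpose_mat E * (U * (transpose_mat U * (Dd * (U * mat_diag n lf))))))"
    unfolding PQ using E by (simp add: sq_tmult[of _ n] sq_assoc[of _ n] cm)
  also have "\<dots> = mtrace (transpose_mat V * (transpose_mat E * (Dd * (U * mat_diag n lf))))"
  proof -
    have "U * (transpose_mat U * (Dd * (U * mat_diag n lf))) = Dd * (U * mat_diag n lf)"
      using UU by (simp add: sq_assoc[of _ n, symmetric] cm sq_one_l[of _ n])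
    then show ?thesis by simp
  qed
  also have "\<dots> = mtrace ((transpose_mat E * (Dd * (U * mat_diag n lf))) * transpose_mat V)"
    by (rule mtrace_mult_comm[of _ n n]) (use E in \<open>auto simp: cm\<close>)
  also have "\<dots> = mtrace (transpose_mat E * (P - Q) * C)"
    unfolding C Dd_def[symmetric] using E by (simp add: sq_assoc[of _ n] cm)
  finally show ?thesis by simp
qed

lemma J_proj: assumes U: "orth_mat n U" and rn: "r \<le> n"
  defines "J \<equiv> mat_diag n (\<lambda>i. if i < r then 1 else (0::real))"
  shows "U * J * transpose_mat U \<in> proj_set n r" "transpose_mat U * (U * J * transpose_mat U) * U = J"
    "\<forall>i<n. J $$ (i,i) = (if i < r then 1 else 0)"
proof -
  have [simp]: "U \<in> carrier_mat n n" and Jc[simp]: "J \<in> carrier_mat n n" using U orth_mat_def J_def by auto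
  have UtU: "transpose_mat U * U = 1\<^sub>m n" using U orth_mat_def by auto
  have JJ: "J * J = J"
  proof -
    have "(\<lambda>i. (if i < r then 1 else 0) * (if i < r then 1 else (0::real))) = (\<lambda>i. if i < r then 1 else 0)" by auto
    then show ?thesis unfolding J_def by simp
  qed
  have J: "proj n J" unfolding proj_def using JJ by (simp add: J_def transpose_diag)
  have trJ: "mtrace J = r"
  proof -
    have "mtrace J = (\<Sum>i<n. if i < r then 1 else (0::real))" unfolding J_def mtrace_def
      by (simp add: mat_diag_def)
    also have "\<dots> = (\<Sum>i<r. if i < r then 1 else (0::real)) + (\<Sum>i\<in>{r..<n}. if i < r then 1 else (0::real))"
      by (rule sum_split_at[OF rn])
    also have "\<dots> = r" by simp
    finally show ?thesis .
  qed
  have oUt: "orth_mat n (transpose_mat U)" by (rule orth_transpose[OF U])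
  have "U * J * transpose_mat U = transpose_mat (transpose_mat U) * J * transpose_mat U" by simp
  note pc = proj_conj[OF J oUt, unfolded transpose_transpose]
  have pr: "proj n (U * J * transpose_mat U)" using pc(1) .
  have "real (vec_space.rank n (U * J * transpose_mat U)) = real r"
    using proj_rank_trace[OF pr] pc(2) trJ by simp
  then show "U * J * transpose_mat U \<in> proj_set n r" using pr unfolding proj_set_def proj_def by auto
  show "transpose_mat U * (U * J * transpose_mat U) * U = J"
  proof -
    have "transpose_mat U * (U * J * transpose_mat U) * U = (transpose_mat U * U) * J * (transpose_mat U * U)"
      by (simp add: sq_assoc[of _ n] cm)
    then show ?thesis using UtU by (simp add: sq_one_l[of _ n] sq_one_r[of _ n])
  qed
  show "\<forall>i<n. J $$ (i,i) = (if i < r then 1 else 0)" unfolding J_def by (simp add: mat_diag_def)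
qed

theorem proposition1:
  fixes M r :: nat and C E pi :: "real mat" and lam mu :: "nat \<Rightarrow> real"
    and sigma1 :: real
  assumes r_pos: "1 \<le> r" and r_le: "r \<le> M"
    and C_sv: "has_singular_values M C lam"
    and lam_zero: "\<forall>i>M. lam i = 0"
    and E_sv: "has_singular_values M E mu"
    and sigma1_def: "sigma1 = mu 1"
    and pi_in: "pi \<in> proj_set M r"
    and pi_max: "\<forall>P\<in>proj_set M r. hs_norm (P * C) \<le> hs_norm (pi * C)"
  shows
    "(let rM = min r (M - r);
          Delta = (\<Sum>i\<in>{r+1..2*r}. (lam i)\<^sup>2);
          Z = (\<lambda>P. (hs_norm (P * C))\<^sup>2 - (hs_norm (pi * C))\<^sup>2
                    + 2 * mtrace (transpose_mat E * (P - pi) * C));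
          I' = ereal (4 * real rM * lam 1 * sigma1);
          II' = (if lam r > lam (r+1)
                 then ereal (4 * real rM * (lam 1)\<^sup>2 / ((lam r)\<^sup>2 - (lam (r+1))\<^sup>2) * sigma1\<^sup>2)
                 else \<infinity>);
          III' = (if lam r > 0
                  then ereal (max (4 * sqrt (real rM * Delta) * (lam 1 / lam r) * sigma1)
                                  (8 * real rM * (lam 1)\<^sup>2 / (lam r)\<^sup>2 * sigma1\<^sup>2))
                  else \<infinity>)
      in (SUP P\<in>proj_set M r. ereal (Z P)) \<le> min I' (min II' III'))"
proof -
  define lf where "lf = (\<lambda>i. lam (Suc i))"
  define rM where "rM = min r (M - r)"
  define Delta where "Delta = (\<Sum>i\<in>{r+1..2*r}. (lam i)\<^sup>2)"
  define Zf where "Zf = (\<lambda>P. (hs_norm (P * C))\<^sup>2 - (hs_norm (pi * C))\<^sup>2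
                    + 2 * mtrace (transpose_mat E * (P - pi) * C))"
  obtain U V where U: "orth_mat M U" and V: "orth_mat M V"
    and Cdef: "C = U * mat_diag M lf * transpose_mat V"
    using C_sv unfolding has_singular_values_def lf_def by auto
  have lam_nn: "\<forall>i\<in>{1..M}. 0 \<le> lam i" and lam_mono: "\<forall>i j. 1 \<le> i \<longrightarrow> i \<le> j \<longrightarrow> j \<le> M \<longrightarrow> lam j \<le> lam i"
    using C_sv unfolding has_singular_values_def by auto
  obtain U2 V2 where U2: "orth_mat M U2" and V2: "orth_mat M V2"
    and Edef: "E = U2 * mat_diag M (\<lambda>i. mu (Suc i)) * transpose_mat V2"
    using E_sv unfolding has_singular_values_def by auto
  have mu_nn: "\<forall>i\<in>{1..M}. 0 \<le> mu i" and mu_mono: "\<forall>i j. 1 \<le> i \<longrightarrow> i \<le> j \<longrightarrow> j \<le> M \<longrightarrow> mu j \<le> mu i"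
    using E_sv unfolding has_singular_values_def by auto
  have Cc: "C \<in> carrier_mat M M" and Ec: "E \<in> carrier_mat M M"
    using C_sv E_sv unfolding has_singular_values_def by auto
  have lf_nn: "\<forall>i. 0 \<le> lf i"
  proof
    fix i show "0 \<le> lf i"
      using lam_nn lam_zero unfolding lf_def by (cases "Suc i \<le> M") auto
  qed
  have lf_mono: "\<forall>i j. i \<le> j \<longrightarrow> lf j \<le> lf i"
  proof (intro allI impI)
    fix i j :: nat assume ij: "i \<le> j"
    show "lf j \<le> lf i"
    proof (cases "Suc j \<le> M")
      case True then show ?thesis using lam_mono ij unfolding lf_def by auto
    next
      case False then show ?thesis using lam_zero lf_nn unfolding lf_def by auto
    qed
  qed
  have lf_zero: "\<forall>i\<ge>M. lf i = 0" using lam_zero unfolding lf_def by auto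
  have sig0: "0 \<le> sigma1" using mu_nn r_pos r_le unfolding sigma1_def by auto
  have mub: "\<forall>i<M. \<bar>mu (Suc i)\<bar> \<le> sigma1" using mu_nn mu_mono unfolding sigma1_def by auto
  define F where "F = transpose_mat U * E * V"
  have Uc[simp]: "U \<in> carrier_mat M M" and Vc[simp]: "V \<in> carrier_mat M M" using U V orth_mat_def by auto
  have Fc: "F \<in> carrier_mat M M" unfolding F_def using Ec by (simp add: cm)
  have Fb1: "\<forall>A \<in> carrier_mat M M. hsq (F * A) \<le> sigma1\<^sup>2 * hsq A"
    unfolding F_def using F_bound(1)[OF U V U2 V2 Edef mub] by auto
  have Fb2: "\<forall>A \<in> carrier_mat M M. hsq (transpose_mat F * A) \<le> sigma1\<^sup>2 * hsq A"
    unfolding F_def using F_bound(2)[OF U V U2 V2 Edef mub] by auto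
  have setproj: "proj M P" "mtrace P = r" if "P \<in> proj_set M r" for P
  proof -
    show pP: "proj M P" using that unfolding proj_set_def proj_def by auto
    have "vec_space.rank M P = r" using that unfolding proj_set_def by auto
    then show "mtrace P = r" using proj_rank_trace[OF pP] by simp
  qed
  define G where "G = transpose_mat U * pi * U"
  have G: "proj M G" "mtrace G = r" unfolding G_def using proj_conj[OF setproj(1)[OF pi_in] U] setproj(2)[OF pi_in] by auto
  have hs_pi: "(hs_norm (pi * C))\<^sup>2 = (\<Sum>i<M. G $$ (i,i) * (lf i)\<^sup>2)"
    unfolding G_def by (rule hs_PC[OF setproj(1)[OF pi_in] U V Cdef])
  have maxi: "(\<Sum>i<r. (lf i)\<^sup>2) \<le> (\<Sum>i<M. G $$ (i,i) * (lf i)\<^sup>2)"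
  proof -
    define J where "J = mat_diag M (\<lambda>i. if i < r then 1 else (0::real))"
    note JP = J_proj[OF U r_le, folded J_def]
    have "(hs_norm ((U * J * transpose_mat U) * C))\<^sup>2 = (\<Sum>i<M. J $$ (i,i) * (lf i)\<^sup>2)"
      using hs_PC[OF setproj(1)[OF JP(1)] U V Cdef] JP(2) by simp
    also have "\<dots> = (\<Sum>i<M. (if i < r then (lf i)\<^sup>2 else 0))"
      using JP(3) by (intro sum.cong) auto
    also have "\<dots> = (\<Sum>i<r. (lf i)\<^sup>2)"
      using sum_split_at[OF r_le, of "\<lambda>i. if i < r then (lf i)\<^sup>2 else 0"] by simp
    finally have 1: "(hs_norm ((U * J * transpose_mat U) * C))\<^sup>2 = (\<Sum>i<r. (lf i)\<^sup>2)" .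
    have "hs_norm ((U * J * transpose_mat U) * C) \<le> hs_norm (pi * C)" using pi_max JP(1) by auto
    moreover have "0 \<le> hs_norm ((U * J * transpose_mat U) * C)" unfolding hs_norm_def
      by (intro real_sqrt_ge_zero sum_nonneg) auto
    ultimately have "(hs_norm ((U * J * transpose_mat U) * C))\<^sup>2 \<le> (hs_norm (pi * C))\<^sup>2"
      by (rule power_mono)
    then show ?thesis using 1 hs_pi by simp
  qed
  have bounds: "Zf P \<le> 4 * real rM * lam 1 * sigma1
     \<and> (lam (r+1) < lam r \<longrightarrow> Zf P \<le> 4 * real rM * (lam 1)\<^sup>2 / ((lam r)\<^sup>2 - (lam (r+1))\<^sup>2) * sigma1\<^sup>2)
     \<and> (0 < lam r \<longrightarrow> Zf P \<le> max (4 * sqrt (real rM * Delta) * (lam 1 / lam r) * sigma1)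
                                  (8 * real rM * (lam 1)\<^sup>2 / (lam r)\<^sup>2 * sigma1\<^sup>2))"
    if P: "P \<in> proj_set M r" for P
  proof -
    define Pm where "Pm = transpose_mat U * P * U"
    have Pm: "proj M Pm" "mtrace Pm = r" unfolding Pm_def using proj_conj[OF setproj(1)[OF P] U] setproj(2)[OF P] by auto
    have Pc: "P \<in> carrier_mat M M" using setproj(1)[OF P] proj_def by auto
    have pic: "pi \<in> carrier_mat M M" using setproj(1)[OF pi_in] proj_def by auto
    have hs_P: "(hs_norm (P * C))\<^sup>2 = (\<Sum>i<M. Pm $$ (i,i) * (lf i)\<^sup>2)"
      unfolding Pm_def by (rule hs_PC[OF setproj(1)[OF P] U V Cdef])
    have Zeq: "Zf P = (\<Sum>i<M. (Pm $$ (i,i) - G $$ (i,i)) * (lf i)\<^sup>2)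
               + 2 * mtrace (transpose_mat F * (Pm - G) * mat_diag M lf)"
      unfolding Zf_def hs_P hs_pi F_def Pm_def G_def trace_term[OF U V Cdef Pc pic Ec]
      by (simp add: sum_subtractf left_diff_distrib)
    note co = core[OF r_pos r_le G(1) Pm(1) G(2) Pm(2) lf_nn lf_mono lf_zero Fc sig0 Fb1 Fb2 maxi, folded Zeq]
    have lf0: "lf 0 = lam 1" and lfr1: "lf (r-1) = lam r" and lfr: "lf r = lam (r+1)"
      unfolding lf_def using r_pos by auto
    have Del: "(\<Sum>i\<in>{r..<2*r}. (lf i)\<^sup>2) = Delta"
    proof -
      have "(\<Sum>i\<in>{r..<2*r}. (lf i)\<^sup>2) = (\<Sum>i\<in>{Suc r..<Suc (2*r)}. (lam i)\<^sup>2)"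
        unfolding lf_def by (rule sum.shift_bounds_Suc_ivl[symmetric])
      also have "{Suc r..<Suc (2*r)} = {r+1..2*r}" by auto
      finally show ?thesis unfolding Delta_def .
    qed
    show ?thesis
    proof (intro conjI impI)
      show "Zf P \<le> 4 * real rM * lam 1 * sigma1" using co(1) lf0 unfolding rM_def by simp
      show "lam (r+1) < lam r \<Longrightarrow> Zf P \<le> 4 * real rM * (lam 1)\<^sup>2 / ((lam r)\<^sup>2 - (lam (r+1))\<^sup>2) * sigma1\<^sup>2"
        using co(2) lf0 lfr1 lfr unfolding rM_def by simp
      assume lr: "0 < lam r"
      have l1r: "lam r \<le> lam 1" using lam_mono r_pos r_le by auto
      have q1: "1 \<le> lam 1 / lam r" using lr l1r by simp
      have D0: "0 \<le> Delta" unfolding Delta_def by (auto intro: sum_nonneg)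
      define k where "k = sqrt (real rM * Delta) * sigma1"
      define q where "q = lam 1 / lam r"
      have k0: "0 \<le> k" unfolding k_def using D0 sig0 by simp
      have "k * 1 \<le> k * q" unfolding q_def using q1 k0 by (rule mult_left_mono)
      then have "4 * k \<le> 4 * (k * q)" by simp
      moreover have "4 * sqrt (real rM * Delta) * q * sigma1 = 4 * (k * q)" unfolding k_def by (simp add: mult_ac)
      ultimately have a: "4 * sqrt (real rM * Delta) * sigma1 \<le> 4 * sqrt (real rM * Delta) * (lam 1 / lam r) * sigma1"
        unfolding q_def[symmetric] k_def by (simp add: mult_ac)
      have q2: "1 \<le> (lam 1)\<^sup>2 / (lam r)\<^sup>2" using lr l1r by (simp add: power_mono)
      have b: "4 * real rM * sigma1\<^sup>2 \<le> 8 * real rM * (lam 1)\<^sup>2 / (lam r)\<^sup>2 * sigma1\<^sup>2"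
      proof -
        have "4 * real rM * sigma1\<^sup>2 * 1 \<le> 4 * real rM * sigma1\<^sup>2 * (2 * ((lam 1)\<^sup>2 / (lam r)\<^sup>2))"
          using q2 by (intro mult_left_mono) auto
        then show ?thesis by (simp add: algebra_simps)
      qed
      show "Zf P \<le> max (4 * sqrt (real rM * Delta) * (lam 1 / lam r) * sigma1)
                                  (8 * real rM * (lam 1)\<^sup>2 / (lam r)\<^sup>2 * sigma1\<^sup>2)"
        using order.trans[OF co(3)[unfolded Del rM_def[symmetric]] max.mono[OF a b]] .
    qed
  qed
  show ?thesis
    unfolding Let_def rM_def[symmetric] Delta_def[symmetric] Zf_def[symmetric]
  proof (rule SUP_least)
    fix P assume P: "P \<in> proj_set M r"
    note bd = bounds[OF P]
    show "ereal (Zf P) \<le> min (ereal (4 * real rM * lam 1 * sigma1))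
            (min (if lam (r + 1) < lam r then ereal (4 * real rM * (lam 1)\<^sup>2 / ((lam r)\<^sup>2 - (lam (r + 1))\<^sup>2) * sigma1\<^sup>2) else \<infinity>)
              (if 0 < lam r then ereal (max (4 * sqrt (real rM * Delta) * (lam 1 / lam r) * sigma1) (8 * real rM * (lam 1)\<^sup>2 / (lam r)\<^sup>2 * sigma1\<^sup>2)) else \<infinity>))"
      using bd by (auto simp del: ereal_max)
  qed
qed

end
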